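(* A rhombic satin of odd order belongs to species $28_o$, and a rhombic satin of even order belongs to species $28_e$.
   Context: A prefabric consists of two perpendicular layers of unit-width strands, warps (vertical) and wefts (horizontal). The plane is divided into unit square cells. Each cell is dark if the warp is on top (seen from the front) and pale otherwise. A symmetry is an isometry of the plane, possibly combined with the side reversal $\tau$, preserving the prefabric. $G_1$ denotes the planar part of the symmetry group, and $H_1$ its side-preserving subgroup. Let $\delta$ be the length of a cell diagonal and $\beta=\delta/2$. The $(n,s)$ satin, with $\gcd(n,s)=1$, is the design of period $n$ in which row $i$ has its single dark cell in column $is \bmod n$. It is isonemal iff $s^2\equiv\pm1\pmod n$ and square iff $s^2\equiv-1\pmod n$. A non-square isonemal satin is rectangular if $n$ is even and $s^2\equiv 1\pmod{2n}$. Otherwise it is called rhombic. A prefabric belongs to species 28 if: - $G_1$ is of crystallographic type $cmm$, with axes at $45^\circ$ to the strands; - the glide-reflections whose axes lie between the mirrors are side-reversing; - all half-turns are side-preserving, so that $H_1$ is of type $p2$ with the rhombic $G_1$ lattice unit; - some half-turn centres lie at cell centres. The supplementary half-turn centres are those at intersections of glide-reflection axes. In each rhombic lattice unit they are the four corners of a central rectangle, which is bounded by glide-reflection axes. - Species $28_e$: the supplementary half-turn centres lie at cell corners, and the central rectangle measures $a\delta$ by $b\delta$ with $a$ odd, $b$ even, and $\gcd(a,b)=1$. - Species $28_o$: the supplementary half-turn centres lie on cell edges but not at cell corners, and the central rectangle measures $a\beta$ by $b\beta$ with $a,b$ odd and $\gcd(a,b)=1$. *)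

theory Defs
  imports "HOL-Analysis.Analysis" "HOL-Number_Theory.Cong"
begin

text \<open>Cells are the unit squares [i,i+1] \<times> [j,j+1] with i,j integers; the cell (i,j)
  lies in column i and row j.  A prefabric (given by its design) is a map
  int \<times> int \<Rightarrow> bool, True meaning dark (warp on top seen from the front).\<close>

type_synonym pt = "real \<times> real"
type_synonym prefabric = "int \<times> int \<Rightarrow> bool"

definition cell_centre :: "int \<times> int \<Rightarrow> pt" where
  "cell_centre c = (of_int (fst c) + 1/2, of_int (snd c) + 1/2)"

definition cell_centres :: "pt set" where
  "cell_centres = range cell_centre"

definition cell_corners :: "pt set" where
  "cell_corners = {p. fst p \<in> \<int> \<and> snd p \<in> \<int>}"

definition cell_edge_points :: "pt set" where
  "cell_edge_points = {p. fst p \<in> \<int> \<or> snd p \<in> \<int>}"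

definition isometry :: "(pt \<Rightarrow> pt) \<Rightarrow> bool" where
  "isometry f \<longleftrightarrow> (\<forall>x y. dist (f x) (f y) = dist x y)"

text \<open>An isometry of the plane respecting the strand structure (cell grid):
  it permutes the cells (equivalently the cell centres).\<close>
definition grid_isometry :: "(pt \<Rightarrow> pt) \<Rightarrow> bool" where
  "grid_isometry f \<longleftrightarrow> isometry f \<and> f ` cell_centres = cell_centres"

text \<open>The isometry interchanges the strand directions (warps go to wefts).\<close>
definition swaps_strands :: "(pt \<Rightarrow> pt) \<Rightarrow> bool" where
  "swaps_strands f \<longleftrightarrow> fst (f (1,0)) = fst (f (0,0))"

text \<open>(f, t) is a symmetry of the prefabric P: f is a grid isometry, t says whether
  it is combined with the side reversal \<tau>.  The colour (which strand is on top)
  of the image cell equals that of the cell iff f does not interchange strand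
  directions exactly when it is not combined with \<tau>.\<close>
definition symmetry :: "prefabric \<Rightarrow> (pt \<Rightarrow> pt) \<Rightarrow> bool \<Rightarrow> bool" where
  "symmetry P f t \<longleftrightarrow> grid_isometry f \<and>
     (\<forall>c d. f (cell_centre c) = cell_centre d \<longrightarrow> P d = (P c = (swaps_strands f = t)))"

definition G1 :: "prefabric \<Rightarrow> (pt \<Rightarrow> pt) set" where
  "G1 P = {f. \<exists>t. symmetry P f t}"

definition H1 :: "prefabric \<Rightarrow> (pt \<Rightarrow> pt) set" where
  "H1 P = {f. symmetry P f False}"

definition dotp :: "pt \<Rightarrow> pt \<Rightarrow> real" where
  "dotp a b = fst a * fst b + snd a * snd b"

definition line_thru :: "pt \<Rightarrow> pt \<Rightarrow> pt set" where
  "line_thru p u = range (\<lambda>t::real. p + t *\<^sub>R u)"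

text \<open>Reflection in the line through p with unit direction u.\<close>
definition reflect_in :: "pt \<Rightarrow> pt \<Rightarrow> pt \<Rightarrow> pt" where
  "reflect_in p u x = p + ((2 * dotp (x - p) u) *\<^sub>R u - (x - p))"

text \<open>f is a glide-reflection (possibly with zero glide, i.e. a reflection) with axis L.\<close>
definition glide_refl_axis :: "(pt \<Rightarrow> pt) \<Rightarrow> pt set \<Rightarrow> bool" where
  "glide_refl_axis f L \<longleftrightarrow> (\<exists>p u d. dotp u u = 1 \<and> L = line_thru p u \<and>
       f = (\<lambda>x. reflect_in p u x + d *\<^sub>R u))"

definition mirror_axis_of :: "(pt \<Rightarrow> pt) \<Rightarrow> pt set \<Rightarrow> bool" where
  "mirror_axis_of f L \<longleftrightarrow> (\<exists>p u. dotp u u = 1 \<and> L = line_thru p u \<and> f = reflect_in p u)"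

definition half_turn :: "(pt \<Rightarrow> pt) \<Rightarrow> pt \<Rightarrow> bool" where
  "half_turn f c \<longleftrightarrow> f = (\<lambda>x. 2 *\<^sub>R c - x)"

definition mirror_axis :: "(pt \<Rightarrow> pt) set \<Rightarrow> pt set \<Rightarrow> bool" where
  "mirror_axis G L \<longleftrightarrow> (\<exists>f\<in>G. mirror_axis_of f L)"

definition between_glide_axis :: "(pt \<Rightarrow> pt) set \<Rightarrow> pt set \<Rightarrow> bool" where
  "between_glide_axis G L \<longleftrightarrow> (\<exists>f\<in>G. glide_refl_axis f L) \<and> \<not> mirror_axis G L"

text \<open>A standard group of type cmm: mirrors x = k, y = k (k integer), translation
  lattice {(a,b) \<in> Z x Z. a + b even} (rhombic / centred rectangular).\<close>
definition std_cmm :: "(pt \<Rightarrow> pt) set" where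
  "std_cmm = {f. \<exists>e1 e2 :: bool. \<exists>a b :: int. even (a + b) \<and>
      f = (\<lambda>x. ((if e1 then - fst x else fst x) + of_int a,
                 (if e2 then - snd x else snd x) + of_int b))}"

definition affine_bij :: "(pt \<Rightarrow> pt) \<Rightarrow> bool" where
  "affine_bij \<phi> \<longleftrightarrow> (\<exists>a b c d e g :: real. a * d - b * c \<noteq> 0 \<and>
      \<phi> = (\<lambda>x. (a * fst x + b * snd x + e, c * fst x + d * snd x + g)))"

definition type_cmm :: "(pt \<Rightarrow> pt) set \<Rightarrow> bool" where
  "type_cmm G \<longleftrightarrow> (\<exists>\<phi>. affine_bij \<phi> \<and> G = (\<lambda>g. inv \<phi> \<circ> g \<circ> \<phi>) ` std_cmm)"

definition diagonal_line :: "pt set \<Rightarrow> bool" where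
  "diagonal_line L \<longleftrightarrow> (\<exists>p u. dotp u u = 1 \<and> L = line_thru p u \<and> \<bar>fst u\<bar> = \<bar>snd u\<bar>)"

definition species28 :: "prefabric \<Rightarrow> bool" where
  "species28 P \<longleftrightarrow>
     type_cmm (G1 P) \<and>
     (\<forall>f\<in>G1 P. \<forall>L. mirror_axis_of f L \<longrightarrow> diagonal_line L) \<and>
     (\<forall>f\<in>G1 P. \<forall>L. glide_refl_axis f L \<and> between_glide_axis (G1 P) L \<longrightarrow> f \<notin> H1 P) \<and>
     (\<forall>f\<in>G1 P. \<forall>c. half_turn f c \<longrightarrow> f \<in> H1 P) \<and>
     (\<exists>f\<in>G1 P. \<exists>c\<in>cell_centres. half_turn f c)"

definition supp_centre :: "(pt \<Rightarrow> pt) set \<Rightarrow> pt \<Rightarrow> bool" where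
  "supp_centre G c \<longleftrightarrow> (\<exists>L M. between_glide_axis G L \<and> between_glide_axis G M \<and>
      L \<noteq> M \<and> c \<in> L \<and> c \<in> M)"

definition par_dist :: "pt \<Rightarrow> pt \<Rightarrow> pt \<Rightarrow> real" where
  "par_dist p u p' = \<bar>dotp (p' - p) (- snd u, fst u)\<bar>"

definition axis_gap :: "(pt \<Rightarrow> pt) set \<Rightarrow> pt \<Rightarrow> pt \<Rightarrow> real \<Rightarrow> bool" where
  "axis_gap G p u X \<longleftrightarrow> X > 0 \<and>
     (\<exists>p'. between_glide_axis G (line_thru p' u) \<and> par_dist p u p' = X) \<and>
     (\<forall>p'. between_glide_axis G (line_thru p' u) \<and> line_thru p' u \<noteq> line_thru p u \<longrightarrow> X \<le> par_dist p u p')"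

definition central_rect :: "(pt \<Rightarrow> pt) set \<Rightarrow> real \<Rightarrow> real \<Rightarrow> bool" where
  "central_rect G X Y \<longleftrightarrow> (\<exists>p u q v. dotp u u = 1 \<and> dotp v v = 1 \<and> dotp u v = 0 \<and>
      between_glide_axis G (line_thru p u) \<and> between_glide_axis G (line_thru q v) \<and>
      axis_gap G p u X \<and> axis_gap G q v Y)"

definition cell_diag :: real where "cell_diag = sqrt 2"
definition half_diag :: real where "half_diag = cell_diag / 2"

definition species28e :: "prefabric \<Rightarrow> bool" where
  "species28e P \<longleftrightarrow> species28 P \<and>
     (\<forall>c. supp_centre (G1 P) c \<longrightarrow> c \<in> cell_corners) \<and>
     (\<exists>a b :: nat. odd a \<and> even b \<and> coprime a b \<and>
        central_rect (G1 P) (a * cell_diag) (b * cell_diag))"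

definition species28o :: "prefabric \<Rightarrow> bool" where
  "species28o P \<longleftrightarrow> species28 P \<and>
     (\<forall>c. supp_centre (G1 P) c \<longrightarrow> c \<in> cell_edge_points - cell_corners) \<and>
     (\<exists>a b :: nat. odd a \<and> odd b \<and> coprime a b \<and>
        central_rect (G1 P) (a * half_diag) (b * half_diag))"

definition satin :: "int \<Rightarrow> int \<Rightarrow> prefabric" where
  "satin n s = (\<lambda>c. fst c mod n = (snd c * s) mod n)"

definition isonemal_satin :: "int \<Rightarrow> int \<Rightarrow> bool" where
  "isonemal_satin n s \<longleftrightarrow> [s^2 = 1] (mod n) \<or> [s^2 = -1] (mod n)"

definition square_satin :: "int \<Rightarrow> int \<Rightarrow> bool" where
  "square_satin n s \<longleftrightarrow> [s^2 = -1] (mod n)"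

definition rectangular_satin :: "int \<Rightarrow> int \<Rightarrow> bool" where
  "rectangular_satin n s \<longleftrightarrow> isonemal_satin n s \<and> \<not> square_satin n s \<and>
      even n \<and> [s^2 = 1] (mod (2 * n))"

definition rhombic_satin :: "int \<Rightarrow> int \<Rightarrow> bool" where
  "rhombic_satin n s \<longleftrightarrow> isonemal_satin n s \<and> \<not> square_satin n s \<and>
      \<not> rectangular_satin n s"

end

theory Submission
  imports Defs
begin

lemma rh_basic:
  fixes n s :: int
  assumes "n > 0" "coprime n s" "rhombic_satin n s"
  shows "n dvd s^2 - 1" "n \<ge> 3" "even n \<Longrightarrow> \<not> (2*n) dvd (s^2 - 1)"
proof -
  have iso: "[s^2 = 1] (mod n) \<or> [s^2 = -1] (mod n)" and nsq: "\<not> [s^2 = -1] (mod n)"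
    using assms(3) unfolding rhombic_satin_def isonemal_satin_def square_satin_def by auto
  then have c1: "[s^2 = 1] (mod n)" by auto
  then show "n dvd s^2 - 1" by (simp add: cong_iff_dvd_diff)
  show "even n \<Longrightarrow> \<not> (2*n) dvd (s^2 - 1)"
    using assms(3) c1 unfolding rhombic_satin_def rectangular_satin_def isonemal_satin_def square_satin_def
    by (auto simp: cong_iff_dvd_diff)
  show "n \<ge> 3"
  proof (rule ccontr)
    assume "\<not> n \<ge> 3"
    then have "n = 1 \<or> n = 2" using assms(1) by auto
    then show False
    proof
      assume "n = 1" then show False using nsq by (simp add: cong_def)
    next
      assume n2: "n = 2"
      then have "odd s" using assms(2) by auto
      then have "even (s^2 + 1)" by simp
      then have "[s^2 = -1] (mod n)" using n2 by (simp add: cong_iff_dvd_diff)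
      then show False using nsq by simp
    qed
  qed
qed

lemma pq_exist:
  fixes n s :: int
  assumes "n > 0" "n dvd s^2 - 1"
  shows "\<exists>p q. p > 0 \<and> q > 0 \<and> p * q = n \<and> q dvd s - 1 \<and> p dvd s + 1"
proof -
  define q where "q = gcd n (s - 1)"
  define p where "p = n div q"
  have qpos: "q > 0" using assms(1) unfolding q_def by simp
  have qn: "q dvd n" unfolding q_def by simp
  have pq: "p * q = n" unfolding p_def using qn by simp
  have ppos: "p > 0" using pq qpos assms(1) by (metis zero_less_mult_pos2)
  obtain c where c: "s - 1 = q * c" unfolding q_def by (meson dvd_def gcd_dvd2)
  have cop: "coprime p c"
  proof -
    have "coprime (n div gcd n (s-1)) ((s-1) div gcd n (s-1))"
      using assms(1) by (intro div_gcd_coprime) auto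
    moreover have "(s-1) div q = c" using c qpos by simp
    ultimately show ?thesis unfolding p_def q_def by simp
  qed
  have "s^2 - 1 = (s - 1) * (s + 1)" by (simp add: power2_eq_square algebra_simps)
  then have "p * q dvd q * c * (s + 1)" using assms(2) pq c by simp
  then have "p dvd c * (s + 1)" using qpos by (simp add: mult.commute mult.left_commute)
  then have "p dvd s + 1" using cop by (simp add: coprime_dvd_mult_right_iff)
  then show ?thesis using ppos qpos pq c by (intro exI[of _ p] exI[of _ q]) auto
qed

lemma pq_even:
  fixes n s p q :: int
  assumes "p > 0" "q > 0" "p * q = n" "q dvd s - 1" "p dvd s + 1" "even n" "coprime n s"
    "\<not> (2*n) dvd (s^2 - 1)"
  shows "odd ((s-1) div q)" "odd ((s+1) div p)" "even p" "even q"
proof -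
  obtain c1 where c1: "s - 1 = q * c1" using assms(4) by auto
  obtain c2 where c2: "s + 1 = p * c2" using assms(5) by auto
  have e: "s^2 - 1 = n * (c1 * c2)" using c1 c2 assms(3)
    by (simp add: power2_eq_square algebra_simps) (metis add_diff_cancel_left' c1 c2 diff_add_cancel mult.assoc mult.commute ring_class.ring_distribs(1) square_diff_one_factored)
  have "odd (c1 * c2)"
  proof
    assume "even (c1*c2)"
    then obtain k where "c1 * c2 = 2 * k" by auto
    then have "s^2 - 1 = (2*n) * k" using e by simp
    then show False using assms(8) by simp
  qed
  then have o1: "odd c1" and o2: "odd c2" by auto
  have "odd s" using assms(6,7) by (metis coprime_common_divisor dvd_mult_right even_iff_mod_2_eq_zero odd_one)
  then have "even (s - 1)" "even (s + 1)" by auto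
  then show "even p" "even q" using c1 c2 o1 o2 by auto
  show "odd ((s-1) div q)" using c1 o1 assms(2) by simp
  show "odd ((s+1) div p)" using c2 o2 assms(1) by simp
qed


lemma int_unit: "(m::int)^2 + k^2 = 1 \<Longrightarrow> (m = 1 \<and> k = 0) \<or> (m = -1 \<and> k = 0) \<or> (m = 0 \<and> k = 1) \<or> (m = 0 \<and> k = -1)"
proof -
  assume h: "m^2 + k^2 = 1"
  have "0 \<le> m^2" "0 \<le> k^2" by simp_all
  then have "m^2 \<le> 1" "k^2 \<le> 1" using h by linarith+
  then have "\<bar>m\<bar> \<le> 1" "\<bar>k\<bar> \<le> 1" by (simp_all add: abs_square_le_1)
  then have "m \<in> {-1,0,1}" "k \<in> {-1,0,1}" by auto
  then show ?thesis using h by auto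
qed

lemma dist_centre: "dist (cell_centre (i1,j1)) (cell_centre (i2,j2)) = sqrt ((of_int (i1-i2))^2 + (of_int (j1-j2))^2)"
  by (simp add: cell_centre_def dist_Pair_Pair dist_real_def)

lemma sqrt_int_eq: "sqrt ((of_int a)^2 + (of_int b)^2) = sqrt (of_int c) \<Longrightarrow> c \<ge> 0 \<Longrightarrow> a^2 + b^2 = (c::int)"
proof -
  assume h: "sqrt ((of_int a)^2 + (of_int b)^2) = sqrt (of_int c)" "c \<ge> 0"
  then have "(of_int a)^2 + (of_int b)^2 = (of_int c :: real)"
    by (metis add_nonneg_nonneg of_int_0_le_iff real_sqrt_eq_iff zero_le_power2)
  then have "of_int (a^2 + b^2) = (of_int c :: real)" by simp
  then show ?thesis by (simp only: of_int_eq_iff)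
qed

lemma centre_inj: "cell_centre c = cell_centre d \<longleftrightarrow> c = d"
  by (cases c, cases d) (auto simp: cell_centre_def)

lemma satin_dvd: "satin n s (i,j) \<longleftrightarrow> n dvd (i - j* s)"
  by (simp add: satin_def mod_eq_dvd_iff)

locale rh =
  fixes n s p q :: int
  assumes n3: "n \<ge> 3" and cop: "coprime n s" and sq: "n dvd s^2 - 1"
  and ppos: "p > 0" and qpos: "q > 0" and pqn: "p*q = n" and qd: "q dvd s - 1" and pd: "p dvd s + 1"
  and evc: "even n \<Longrightarrow> odd ((s-1) div q) \<and> odd ((s+1) div p) \<and> even p \<and> even q"
begin

abbreviation "P \<equiv> satin n s"

definition T :: "int \<Rightarrow> int \<Rightarrow> bool" where "T a b \<longleftrightarrow> n dvd (a - b* s)"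

lemma not_dvd1: "\<not> n dvd 1" using n3 by (auto dest: zdvd_imp_le)

lemma not_dvd2: "\<not> n dvd 2" using n3 by (auto dest: zdvd_imp_le)

lemma not_dvd_s: "\<not> n dvd s"
  using cop not_dvd1 by (metis coprime_common_divisor dvd_refl)

lemma not_dvd_2s: "\<not> n dvd 2* s"
  using cop not_dvd2 by (metis coprime_dvd_mult_left_iff)

lemma adjacent:
  assumes "dist (cell_centre d1) (cell_centre d2) = 1" "P d1" "P d2"
  shows False
proof -
  obtain i1 j1 i2 j2 where d: "d1 = (i1,j1)" "d2 = (i2,j2)" by (cases d1, cases d2)
  have "sqrt ((of_int (i1-i2))^2 + (of_int (j1-j2))^2) = sqrt (of_int 1)"
    using assms(1) d dist_centre by simp
  then have "(i1-i2)^2 + (j1-j2)^2 = 1" by (rule sqrt_int_eq) simp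
  then have c: "(i1-i2 = 1 \<and> j1-j2 = 0) \<or> (i1-i2 = -1 \<and> j1-j2 = 0) \<or> (i1-i2 = 0 \<and> j1-j2 = 1) \<or> (i1-i2 = 0 \<and> j1-j2 = -1)"
    by (rule int_unit)
  have h1: "n dvd (i1 - j1* s)" and h2: "n dvd (i2 - j2* s)" using assms(2,3) d satin_dvd by auto
  have "n dvd (i1 - j1* s) - (i2 - j2* s)" using h1 h2 by (rule dvd_diff)
  moreover have "(i1 - j1* s) - (i2 - j2* s) = (i1 - i2) - (j1 - j2)* s" by (simp add: algebra_simps)
  ultimately have h: "n dvd (i1 - i2) - (j1 - j2)* s" by simp
  from c show False
  proof (elim disjE)
    assume "i1-i2 = 1 \<and> j1-j2 = 0" then show False using h not_dvd1 by simp
  next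
    assume "i1-i2 = -1 \<and> j1-j2 = 0" then show False using h not_dvd1 by simp
  next
    assume "i1-i2 = 0 \<and> j1-j2 = 1" then show False using h not_dvd_s by simp
  next
    assume "i1-i2 = 0 \<and> j1-j2 = -1" then show False using h not_dvd_s by simp
  qed
qed

lemma centre_img:
  assumes "grid_isometry f"
  obtains d where "f (cell_centre c) = cell_centre d"
proof -
  have "f (cell_centre c) \<in> cell_centres" using assms unfolding grid_isometry_def cell_centres_def by blast
  then show ?thesis using that unfolding cell_centres_def by blast
qed

lemma CP:
  assumes "symmetry P f t"
  shows "t = swaps_strands f"
proof (rule ccontr)
  assume ne: "t \<noteq> swaps_strands f"
  have gi: "grid_isometry f" using assms symmetry_def by blast
  obtain d1 where d1: "f (cell_centre (1,0)) = cell_centre d1" using centre_img[OF gi] .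
  obtain d2 where d2: "f (cell_centre (2,0)) = cell_centre d2" using centre_img[OF gi] .
  have p1: "\<not> P (1,0)" using n3 by (simp add: satin_dvd zdvd_not_zless)
  have p2: "\<not> P (2,0)" using n3 by (simp add: satin_dvd zdvd_not_zless)
  have col: "\<And>c d. f (cell_centre c) = cell_centre d \<Longrightarrow> P d = (\<not> P c)"
    using assms ne unfolding symmetry_def by auto
  have "P d1" "P d2" using col[OF d1] col[OF d2] p1 p2 by auto
  moreover have "dist (cell_centre d1) (cell_centre d2) = 1"
  proof -
    have "isometry f" using gi grid_isometry_def by blast
    then have "dist (cell_centre d1) (cell_centre d2) = dist (cell_centre (1,0)) (cell_centre (2,0))"
      using d1 d2 unfolding isometry_def by metis
    also have "\<dots> = 1" by (simp add: dist_centre)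
    finally show ?thesis .
  qed
  ultimately show False using adjacent by blast
qed

end

definition Fm :: "bool \<Rightarrow> bool \<Rightarrow> int \<Rightarrow> int \<Rightarrow> pt \<Rightarrow> pt" where
"Fm ng sw a b x = (if sw then (if ng then (1 - snd x + of_int a, 1 - fst x + of_int b) else (snd x + of_int a, fst x + of_int b))
   else (if ng then (1 - fst x + of_int a, 1 - snd x + of_int b) else (fst x + of_int a, snd x + of_int b)))"

definition cm :: "bool \<Rightarrow> bool \<Rightarrow> int \<Rightarrow> int \<Rightarrow> int \<times> int \<Rightarrow> int \<times> int" where
"cm ng sw a b c = (if sw then (if ng then (a - snd c, b - fst c) else (snd c + a, fst c + b))
   else (if ng then (a - fst c, b - snd c) else (fst c + a, snd c + b)))"

lemma Fm_centre: "Fm ng sw a b (cell_centre c) = cell_centre (cm ng sw a b c)"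
  by (cases c) (auto simp: Fm_def cm_def cell_centre_def)

lemma cm_surj: "\<exists>c. cm ng sw a b c = d"
proof -
  obtain d1 d2 where d: "d = (d1,d2)" by (cases d)
  show ?thesis
  proof (cases sw; cases ng)
    assume "sw" "ng" then show ?thesis using d by (intro exI[of _ "(b - d2, a - d1)"]) (simp add: cm_def)
  next
    assume "sw" "\<not>ng" then show ?thesis using d by (intro exI[of _ "(d2 - b, d1 - a)"]) (simp add: cm_def)
  next
    assume "\<not>sw" "ng" then show ?thesis using d by (intro exI[of _ "(a - d1, b - d2)"]) (simp add: cm_def)
  next
    assume "\<not>sw" "\<not>ng" then show ?thesis using d by (intro exI[of _ "(d1 - a, d2 - b)"]) (simp add: cm_def)
  qed
qed

lemma dist_eq_sq: "(a1-b1)^2 + (a2-b2)^2 = (c1-d1)^2+(c2-d2)^2 \<Longrightarrow> dist (a1::real,a2::real) (b1,b2) = dist (c1,c2) (d1,d2)"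
  by (simp add: dist_Pair_Pair dist_real_def)

lemma Fm_isometry: "isometry (Fm ng sw a b)"
  unfolding isometry_def
proof (intro allI)
  fix x y :: pt
  obtain x1 x2 y1 y2 where xy: "x = (x1,x2)" "y = (y1,y2)" by (cases x, cases y)
  show "dist (Fm ng sw a b x) (Fm ng sw a b y) = dist x y"
    unfolding xy Fm_def by (cases sw; cases ng; simp only: if_True if_False fst_conv snd_conv; rule dist_eq_sq; simp add: power2_eq_square algebra_simps)
qed

lemma Fm_grid: "grid_isometry (Fm ng sw a b)"
  unfolding grid_isometry_def
proof
  show "isometry (Fm ng sw a b)" by (rule Fm_isometry)
  show "Fm ng sw a b ` cell_centres = cell_centres"
  proof
    show "Fm ng sw a b ` cell_centres \<subseteq> cell_centres"
      unfolding cell_centres_def using Fm_centre by auto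
    show "cell_centres \<subseteq> Fm ng sw a b ` cell_centres"
    proof
      fix x assume "x \<in> cell_centres"
      then obtain d where x: "x = cell_centre d" unfolding cell_centres_def by auto
      obtain c where "cm ng sw a b c = d" using cm_surj by blast
      then have "x = Fm ng sw a b (cell_centre c)" using x Fm_centre by simp
      then show "x \<in> Fm ng sw a b ` cell_centres" unfolding cell_centres_def by auto
    qed
  qed
qed

lemma Fm_swaps: "swaps_strands (Fm ng sw a b) = sw"
  by (cases sw; cases ng) (simp_all add: swaps_strands_def Fm_def)

context rh begin

lemma swap_dvd: "n dvd (j - i * s) \<longleftrightarrow> n dvd (i - j * s)"
proof -
  have e1: "i - j * s = - s * (j - i * s) - i * (s^2 - 1)" by (simp add: power2_eq_square algebra_simps)
  have e2: "j - i * s = - s * (i - j * s) - j * (s^2 - 1)" by (simp add: power2_eq_square algebra_simps)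
  have A: "n dvd (y - x * s)" if "n dvd (x - y * s)" for x y
  proof -
    have "y - x * s = - s * (x - y * s) - y * (s^2 - 1)" by (simp add: power2_eq_square algebra_simps)
    moreover have "n dvd - s * (x - y * s)" using that by (rule dvd_mult)
    moreover have "n dvd y * (s^2 - 1)" using sq by (rule dvd_mult)
    ultimately show ?thesis by (simp add: dvd_diff)
  qed
  show ?thesis using A by blast
qed

lemma dvd_sub_iff: assumes "(n::int) dvd X" shows "(n dvd (X - Y)) = (n dvd Y)"
proof
  assume "n dvd X - Y"
  then have "n dvd X - (X - Y)" by (rule dvd_diff[OF assms])
  then show "n dvd Y" by simp
next
  assume "n dvd Y" then show "n dvd X - Y" by (rule dvd_diff[OF assms])
qed

lemma shift_add: "(n::int) dvd X \<Longrightarrow> E = X + Y \<Longrightarrow> (n dvd E) = (n dvd Y)"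
  by (simp add: dvd_add_right_iff)

lemma shift_sub: "(n::int) dvd X \<Longrightarrow> E = X - Y \<Longrightarrow> (n dvd E) = (n dvd Y)"
  using dvd_sub_iff by simp

lemma cm_colour: assumes "T a b" shows "P (cm ng sw a b c) = P c"
proof -
  obtain i j where c: "c = (i,j)" by (cases c)
  have t: "n dvd (a - b * s)" using assms T_def by simp
  show ?thesis
  proof (cases sw; cases ng)
    assume h: "sw" "ng"
    have "P (cm ng sw a b c) = (n dvd ((a - j) - (b - i) * s))" using h c by (simp add: cm_def satin_dvd)
    also have "\<dots> = (n dvd (j - i * s))" by (rule shift_sub[OF t]) (simp add: algebra_simps)
    finally show ?thesis using swap_dvd c satin_dvd by simp
  next
    assume h: "sw" "\<not>ng"
    have "P (cm ng sw a b c) = (n dvd ((j + a) - (i + b) * s))" using h c by (simp add: cm_def satin_dvd)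
    also have "\<dots> = (n dvd (j - i * s))" by (rule shift_add[OF t]) (simp add: algebra_simps)
    finally show ?thesis using swap_dvd c satin_dvd by simp
  next
    assume h: "\<not>sw" "ng"
    have "P (cm ng sw a b c) = (n dvd ((a - i) - (b - j) * s))" using h c by (simp add: cm_def satin_dvd)
    also have "\<dots> = (n dvd (i - j * s))" by (rule shift_sub[OF t]) (simp add: algebra_simps)
    finally show ?thesis using c satin_dvd by simp
  next
    assume h: "\<not>sw" "\<not>ng"
    have "P (cm ng sw a b c) = (n dvd ((i + a) - (j + b) * s))" using h c by (simp add: cm_def satin_dvd)
    also have "\<dots> = (n dvd (i - j * s))" by (rule shift_add[OF t]) (simp add: algebra_simps)
    finally show ?thesis using c satin_dvd by simp
  qed
qed

lemma Fm_sym: assumes "T a b" shows "symmetry P (Fm ng sw a b) sw"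
  unfolding symmetry_def
proof (intro conjI allI impI)
  show "grid_isometry (Fm ng sw a b)" by (rule Fm_grid)
  fix c d assume "Fm ng sw a b (cell_centre c) = cell_centre d"
  then have "cell_centre (cm ng sw a b c) = cell_centre d" by (simp add: Fm_centre)
  then have "d = cm ng sw a b c" by (simp add: centre_inj)
  then show "P d = (P c = (swaps_strands (Fm ng sw a b) = sw))" using cm_colour[OF assms] Fm_swaps by simp
qed

lemma Fm_G1: "T a b \<Longrightarrow> Fm ng sw a b \<in> G1 P"
  using Fm_sym unfolding G1_def by blast

end

lemma lin_decomp:
  assumes "isometry f"
  shows "linear (\<lambda>x. f x - f 0)"
proof -
  have "\<forall>x y. dist (f x - f 0) (f y - f 0) = dist x y"
    using assms unfolding isometry_def by (simp add: dist_norm)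
  then show ?thesis by (intro isometry_linear) simp_all
qed

lemma centre_img':
  assumes "grid_isometry f"
  obtains d where "f (cell_centre c) = cell_centre d"
proof -
  have "f (cell_centre c) \<in> cell_centres" using assms unfolding grid_isometry_def cell_centres_def by blast
  then show ?thesis using that unfolding cell_centres_def by blast
qed

lemma cases8:
  fixes m1 k1 m2 k2 :: int
  assumes "m1^2 + k1^2 = 1" "m2^2 + k2^2 = 1" "(m1-m2)^2 + (k1-k2)^2 = 2"
  shows "(m1,k1,m2,k2) \<in> {(1,0,0,1),(-1,0,0,-1),(0,1,1,0),(0,-1,-1,0),(1,0,0,-1),(-1,0,0,1),(0,1,-1,0),(0,-1,1,0)}"
  using int_unit[OF assms(1)] int_unit[OF assms(2)] assms(3) by (elim disjE conjE; simp)

lemma grid_form: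
  assumes "grid_isometry f"
  obtains m1 k1 m2 k2 w1 w2 :: int where
    "m1^2 + k1^2 = 1" "m2^2 + k2^2 = 1" "(m1-m2)^2 + (k1-k2)^2 = 2"
    "\<And>x. f x = (of_int w1 + 1/2 + (fst x - 1/2) * of_int m1 + (snd x - 1/2) * of_int m2,
                 of_int w2 + 1/2 + (fst x - 1/2) * of_int k1 + (snd x - 1/2) * of_int k2)"
proof -
  have iso: "isometry f" using assms grid_isometry_def by blast
  define L where "L = (\<lambda>x. f x - f 0)"
  have lin: "linear L" unfolding L_def using lin_decomp[OF iso] .
  obtain d0 where d0: "f (cell_centre (0,0)) = cell_centre d0" using centre_img'[OF assms] .
  obtain d1 where d1: "f (cell_centre (1,0)) = cell_centre d1" using centre_img'[OF assms] .
  obtain d2 where d2: "f (cell_centre (0,1)) = cell_centre d2" using centre_img'[OF assms] .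
  obtain w1 w2 where w: "d0 = (w1,w2)" by (cases d0)
  obtain u1 u2 where u: "d1 = (u1,u2)" by (cases d1)
  obtain v1 v2 where v: "d2 = (v1,v2)" by (cases d2)
  define m1 where "m1 = u1 - w1"
  define k1 where "k1 = u2 - w2"
  define m2 where "m2 = v1 - w1"
  define k2 where "k2 = v2 - w2"
  have dd: "dist (cell_centre d) (cell_centre d') = dist c c'"
    if "f c = cell_centre d" "f c' = cell_centre d'" for c c' d d'
  proof -
    have "dist (cell_centre d) (cell_centre d') = dist (f c) (f c')" using that by simp
    also have "\<dots> = dist c c'" using iso unfolding isometry_def by blast
    finally show ?thesis .
  qed
  have "dist (cell_centre d1) (cell_centre d0) = dist (cell_centre (1,0)) (cell_centre (0,0))"
    using dd d0 d1 by blast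
  then have "sqrt ((of_int m1)^2 + (of_int k1)^2) = sqrt (of_int 1)"
    using u w by (simp add: dist_centre m1_def k1_def)
  then have h1: "m1^2 + k1^2 = 1" by (rule sqrt_int_eq) simp
  have "dist (cell_centre d2) (cell_centre d0) = dist (cell_centre (0,1)) (cell_centre (0,0))"
    using dd d0 d2 by blast
  then have "sqrt ((of_int m2)^2 + (of_int k2)^2) = sqrt (of_int 1)"
    using v w by (simp add: dist_centre m2_def k2_def)
  then have h2: "m2^2 + k2^2 = 1" by (rule sqrt_int_eq) simp
  have "dist (cell_centre d1) (cell_centre d2) = dist (cell_centre (1,0)) (cell_centre (0,1))"
    using dd d1 d2 by blast
  then have "sqrt ((of_int (m1-m2))^2 + (of_int (k1-k2))^2) = sqrt (of_int 2)"
    using u v by (simp add: dist_centre m1_def k1_def m2_def k2_def)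
  then have h3: "(m1-m2)^2 + (k1-k2)^2 = 2" by (rule sqrt_int_eq) simp
  have Lf: "f x = f 0 + L x" for x unfolding L_def by simp
  have Ld: "L x - L y = L (x - y)" for x y using lin by (simp add: linear_diff)
  have Le1: "L (1,0) = (of_int m1, of_int k1)"
  proof -
    have "L (1,0) = L (cell_centre (1,0)) - L (cell_centre (0,0))"
      using Ld by (simp add: cell_centre_def)
    also have "\<dots> = f (cell_centre (1,0)) - f (cell_centre (0,0))" unfolding L_def by simp
    also have "\<dots> = (of_int m1, of_int k1)" using d0 d1 u w by (simp add: cell_centre_def m1_def k1_def)
    finally show ?thesis .
  qed
  have Le2: "L (0,1) = (of_int m2, of_int k2)"
  proof -
    have "L (0,1) = L (cell_centre (0,1)) - L (cell_centre (0,0))"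
      using Ld by (simp add: cell_centre_def)
    also have "\<dots> = f (cell_centre (0,1)) - f (cell_centre (0,0))" unfolding L_def by simp
    also have "\<dots> = (of_int m2, of_int k2)" using d0 d2 v w by (simp add: cell_centre_def m2_def k2_def)
    finally show ?thesis .
  qed
  have Lx: "L x = (fst x * of_int m1 + snd x * of_int m2, fst x * of_int k1 + snd x * of_int k2)" for x
  proof -
    have xe: "x = fst x *\<^sub>R (1,0) + snd x *\<^sub>R (0,1)" by (cases x) simp
    have "L x = L (fst x *\<^sub>R (1,0) + snd x *\<^sub>R (0,1))" using xe by (rule arg_cong)
    also have "\<dots> = fst x *\<^sub>R L (1,0) + snd x *\<^sub>R L (0,1)"
      by (simp only: linear_add[OF lin] linear_scale[OF lin])
    finally have "L x = fst x *\<^sub>R L (1,0) + snd x *\<^sub>R L (0,1)" .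
    then show ?thesis using Le1 Le2 by simp
  qed
  have "f x = (of_int w1 + 1/2 + (fst x - 1/2) * of_int m1 + (snd x - 1/2) * of_int m2,
                 of_int w2 + 1/2 + (fst x - 1/2) * of_int k1 + (snd x - 1/2) * of_int k2)" for x
  proof -
    have "f x - f (cell_centre (0,0)) = L x - L (cell_centre (0,0))" unfolding L_def by simp
    then have "f x = cell_centre d0 + (L x - L (cell_centre (0,0)))" using d0 by (simp add: algebra_simps)
    then show ?thesis using w Lx by (simp add: cell_centre_def algebra_simps)
  qed
  then show ?thesis using that h1 h2 h3 by blast
qed

context rh begin

lemma colour_cases:
  assumes col: "\<And>i j. P (w1 + i*m1 + j*m2, w2 + i*k1 + j*k2) = P (i,j)"
  and c8: "(m1,k1,m2,k2) \<in> {(1,0,0,1),(-1,0,0,-1),(0,1,1,0),(0,-1,-1,0),(1,0,0,-1),(-1,0,0,1),(0,1,-1,0),(0,-1,1,0)}"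
  shows "T w1 w2 \<and> (m1,k1,m2,k2) \<in> {(1,0,0,1),(-1,0,0,-1),(0,1,1,0),(0,-1,-1,0)}"
proof -
  have t: "n dvd (w1 - w2 * s)" using col[of 0 0] by (simp add: satin_dvd)
  have cs: "n dvd (w1 + s*m1 + m2) - (w2 + s*k1 + k2) * s" using col[of s 1] by (simp add: satin_dvd)
  have e: "(w1 + s*m1 + m2) - (w2 + s*k1 + k2) * s = (w1 - w2 * s) + (s * m1 + m2 - s * k2 - k1 * (s^2 - 1) - k1)"
    by (simp add: power2_eq_square algebra_simps)
  have X: "n dvd (s * m1 + m2 - s * k2 - k1 * (s^2 - 1) - k1)"
    using cs t unfolding e by (simp add: dvd_add_right_iff)
  have Y: "n dvd (s * m1 + m2 - s * k2 - k1)"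
  proof -
    have "n dvd k1 * (s^2 - 1)" using sq by (rule dvd_mult)
    then have "n dvd (s * m1 + m2 - s * k2 - k1 * (s^2 - 1) - k1) + k1 * (s^2 - 1)" using X by (rule dvd_add[rotated])
    then show ?thesis by (simp add: algebra_simps)
  qed
  have "(m1,k1,m2,k2) \<notin> {(1,0,0,-1),(-1,0,0,1),(0,1,-1,0),(0,-1,1,0)}"
  proof
    assume "(m1,k1,m2,k2) \<in> {(1,0,0,-1),(-1,0,0,1),(0,1,-1,0),(0,-1,1,0)}"
    then have "n dvd 2 * s \<or> n dvd - (2 * s) \<or> n dvd 2 \<or> n dvd -2" using Y by (elim insertE emptyE) simp_all
    then show False using not_dvd2 not_dvd_2s by (simp only: dvd_minus_iff) blast
  qed
  then show ?thesis using c8 t T_def by auto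
qed

lemma G1_sub:
  assumes "f \<in> G1 P"
  shows "\<exists>ng sw a b. T a b \<and> f = Fm ng sw a b"
proof -
  obtain t where sym: "symmetry P f t" using assms G1_def by blast
  have gi: "grid_isometry f" using sym symmetry_def by blast
  have col: "P d = P c" if "f (cell_centre c) = cell_centre d" for c d
  proof -
    have "P d = (P c = (swaps_strands f = t))" using sym that unfolding symmetry_def by blast
    then show ?thesis using CP[OF sym] by simp
  qed
  have ex: "\<exists>m1 k1 m2 k2 w1 w2. (m1^2 + k1^2 = 1 \<and> m2^2 + k2^2 = 1 \<and> (m1-m2)^2 + (k1-k2)^2 = 2) \<and>
     (\<forall>x. f x = (of_int w1 + 1/2 + (fst x - 1/2) * of_int m1 + (snd x - 1/2) * of_int m2,
                 of_int w2 + 1/2 + (fst x - 1/2) * of_int k1 + (snd x - 1/2) * of_int k2))"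
    by (rule grid_form[OF gi]) (intro exI conjI allI; assumption)
  then obtain m1 k1 m2 k2 w1 w2 where hhf: "(m1^2 + k1^2 = 1 \<and> m2^2 + k2^2 = 1 \<and> (m1-m2)^2 + (k1-k2)^2 = 2) \<and>
     (\<forall>x. f x = (of_int w1 + 1/2 + (fst x - 1/2) * of_int m1 + (snd x - 1/2) * of_int m2,
                 of_int w2 + 1/2 + (fst x - 1/2) * of_int k1 + (snd x - 1/2) * of_int k2))"
    by (elim exE) (rule that)
  have hh: "m1^2 + k1^2 = 1 \<and> m2^2 + k2^2 = 1 \<and> (m1-m2)^2 + (k1-k2)^2 = 2" using hhf by (rule conjunct1)
  have fx': "\<forall>x. f x = (of_int w1 + 1/2 + (fst x - 1/2) * of_int m1 + (snd x - 1/2) * of_int m2,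
                 of_int w2 + 1/2 + (fst x - 1/2) * of_int k1 + (snd x - 1/2) * of_int k2)" using hhf by (rule conjunct2)
  have h: "m1^2 + k1^2 = 1" "m2^2 + k2^2 = 1" "(m1-m2)^2 + (k1-k2)^2 = 2" using hh by simp_all
  have fx: "f x = (of_int w1 + 1/2 + (fst x - 1/2) * of_int m1 + (snd x - 1/2) * of_int m2,
                 of_int w2 + 1/2 + (fst x - 1/2) * of_int k1 + (snd x - 1/2) * of_int k2)" for x
    using fx' by (rule spec)
  have "f (cell_centre (i,j)) = cell_centre (w1 + i*m1 + j*m2, w2 + i*k1 + j*k2)" for i j
    using fx by (simp add: cell_centre_def algebra_simps)
  then have "P (w1 + i*m1 + j*m2, w2 + i*k1 + j*k2) = P (i,j)" for i j by (rule col)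
  then have TC: "T w1 w2 \<and> (m1,k1,m2,k2) \<in> {(1,0,0,1),(-1,0,0,-1),(0,1,1,0),(0,-1,-1,0)}"
    by (rule colour_cases[OF _ cases8[OF h]])
  have T: "T w1 w2" using TC by (rule conjunct1)
  have c4: "(m1,k1,m2,k2) \<in> {(1,0,0,1),(-1,0,0,-1),(0,1,1,0),(0,-1,-1,0)}" using TC by (rule conjunct2)
  have fe: "f = Fm ng sw w1 w2" if "\<And>x1 x2. f (x1,x2) = Fm ng sw w1 w2 (x1,x2)" for ng sw
  proof (rule ext)
    fix x show "f x = Fm ng sw w1 w2 x" using that[of "fst x" "snd x"] by simp
  qed
  from c4 show ?thesis
  proof (elim insertE emptyE)
    assume "(m1,k1,m2,k2) = (1,0,0,1)"
    then have "f = Fm False False w1 w2" using fx by (intro fe) (simp add: Fm_def algebra_simps)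
    then show ?thesis using T by blast
  next
    assume "(m1,k1,m2,k2) = (-1,0,0,-1)"
    then have "f = Fm True False w1 w2" using fx by (intro fe) (simp add: Fm_def algebra_simps)
    then show ?thesis using T by blast
  next
    assume "(m1,k1,m2,k2) = (0,1,1,0)"
    then have "f = Fm False True w1 w2" using fx by (intro fe) (simp add: Fm_def algebra_simps)
    then show ?thesis using T by blast
  next
    assume "(m1,k1,m2,k2) = (0,-1,-1,0)"
    then have "f = Fm True True w1 w2" using fx by (intro fe) (simp add: Fm_def algebra_simps)
    then show ?thesis using T by blast
  qed
qed

lemma G1_eq: "G1 P = {f. \<exists>ng sw a b. T a b \<and> f = Fm ng sw a b}"
  using G1_sub Fm_G1 by blast

end

context rh begin

lemma par: "even p \<longleftrightarrow> even q"
proof (cases "even n")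
  case True then show ?thesis using evc by auto
next
  case False
  then have "odd (p*q)" using pqn by simp
  then show ?thesis by simp
qed

lemma c1c2: obtains c1 c2 where "s - 1 = q * c1" "s + 1 = p * c2" "even n \<longrightarrow> odd c1 \<and> odd c2"
proof -
  obtain c1 where c1: "s - 1 = q * c1" using qd by auto
  obtain c2 where c2: "s + 1 = p * c2" using pd by auto
  have "even n \<longrightarrow> odd c1 \<and> odd c2" using evc c1 c2 qpos ppos by auto
  then show ?thesis using that c1 c2 by blast
qed

lemma NT: "T a b \<longleftrightarrow> (\<exists>A B. a + b = p*A \<and> a - b = q*B \<and> even (A+B))"
proof -
  obtain c1 c2 where c1: "s - 1 = q * c1" and c2: "s + 1 = p * c2" and cc: "even n \<longrightarrow> odd c1 \<and> odd c2"
    by (rule c1c2)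
  show ?thesis
  proof
    assume "T a b"
    then obtain k where k: "a - b * s = n * k" unfolding T_def by auto
    define A where "A = q * k + b * c2"
    define B where "B = p * k + b * c1"
    have eA: "a + b = p * A" unfolding A_def using k c2 pqn by algebra
    have eB: "a - b = q * B" unfolding B_def using k c1 pqn by algebra
    have "even (A + B)"
    proof (cases "even n")
      case True
      then have "odd c1" "odd c2" "even p" "even q" using cc evc by auto
      then show ?thesis unfolding A_def B_def by simp
    next
      case False
      then have "odd p" "odd q" using pqn by auto
      moreover have "p * A + q * B = 2 * a" using eA eB by algebra
      then have "even (p * A + q * B)" by simp
      ultimately show ?thesis by simp
    qed
    then show "\<exists>A B. a + b = p*A \<and> a - b = q*B \<and> even (A+B)" using eA eB by blast
  next
    assume "\<exists>A B. a + b = p*A \<and> a - b = q*B \<and> even (A+B)"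
    then obtain A B where eA: "a + b = p*A" and eB: "a - b = q*B" and ev: "even (A+B)" by blast
    have e2: "2 * (a - b * s) = n * (B * c2 - A * c1)"
    proof -
      have "2 * (a - b * s) = (a + b) * (1 - s) + (a - b) * (1 + s)" by (simp add: algebra_simps)
      also have "\<dots> = p * A * (- (q * c1)) + q * B * (p * c2)" using eA eB c1 c2 by algebra
      also have "\<dots> = n * (B * c2 - A * c1)" using pqn by (simp add: algebra_simps)
      finally show ?thesis .
    qed
    show "T a b"
    proof (cases "even n")
      case True
      then have "odd c1" "odd c2" using cc by auto
      then have "even (B * c2 - A * c1)" using ev by simp
      then obtain m where "B * c2 - A * c1 = 2 * m" by (rule evenE)
      then have "a - b * s = n * m" using e2 by simp
      then show ?thesis unfolding T_def by simp
    next
      case False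
      then have "coprime n 2" by (simp add: coprime_commute)
      moreover have "n dvd 2 * (a - b * s)" using e2 by simp
      ultimately have "n dvd (a - b * s)" by (meson coprime_dvd_mult_right_iff)
      then show ?thesis unfolding T_def .
    qed
  qed
qed

lemma exab: "even (A + B) \<Longrightarrow> even (p*A + q*B) \<and> even (p*A - q*B)"
  using par by auto

lemma cop_odd: "odd n \<Longrightarrow> coprime p q"
proof -
  assume on: "odd n"
  obtain c1 c2 where c1: "s - 1 = q * c1" and c2: "s + 1 = p * c2" by (rule c1c2)
  show "coprime p q"
  proof (rule coprimeI)
    fix d assume dp: "d dvd p" and dq: "d dvd q"
    have "d dvd (s + 1) - (s - 1)" using dp dq c1 c2 by (simp add: dvd_diff)
    then have d2: "d dvd 2" by simp
    have "d dvd n" using dp pqn by auto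
    then have "odd d" using on by (metis dvd_trans)
    then have "coprime d 2" by simp
    then show "is_unit d" using d2 by (rule coprime_common_divisor[OF _ dvd_refl])
  qed
qed

lemma even_facts:
  assumes en: "even n"
  shows "coprime (p div 2) (q div 2)" "odd (p div 2 + q div 2)" "p = 2 * (p div 2)" "q = 2 * (q div 2)"
proof -
  obtain c1 c2 where c1: "s - 1 = q * c1" and c2: "s + 1 = p * c2" and cc: "even n \<longrightarrow> odd c1 \<and> odd c2"
    by (rule c1c2)
  have ep: "even p" and eq: "even q" using evc en by auto
  show pp: "p = 2 * (p div 2)" and qq: "q = 2 * (q div 2)" using ep eq by simp_all
  define p' where "p' = p div 2"
  define q' where "q' = q div 2"
  have key: "p' * c2 - q' * c1 = 1"
  proof -
    have "2 * (p' * c2 - q' * c1) = (s + 1) - (s - 1)" using c1 c2 pp qq unfolding p'_def q'_def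
      by algebra
    then show ?thesis by simp
  qed
  have o: "odd c1" "odd c2" using cc en by auto
  show "odd (p div 2 + q div 2)"
  proof
    assume "even (p div 2 + q div 2)"
    then have "even p' = even q'" unfolding p'_def q'_def by simp
    then have "even (p' * c2 - q' * c1)" using o by simp
    then show False using key by simp
  qed
  show "coprime (p div 2) (q div 2)"
  proof (rule coprimeI)
    fix d assume dp: "d dvd p div 2" and dq: "d dvd q div 2"
    then have "d dvd p' * c2 - q' * c1" unfolding p'_def q'_def by (simp add: dvd_diff)
    then show "is_unit d" using key by simp
  qed
qed

end

definition sg :: "bool \<Rightarrow> bool \<Rightarrow> int \<Rightarrow> int \<Rightarrow> pt \<Rightarrow> pt" where
  "sg e1 e2 A B = (\<lambda>x. ((if e1 then - fst x else fst x) + of_int A, (if e2 then - snd x else snd x) + of_int B))"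

lemma std_cmm_eq: "std_cmm = {g. \<exists>e1 e2 A B. even (A + B) \<and> g = sg e1 e2 A B}"
  unfolding std_cmm_def sg_def by blast

context rh begin

definition phi :: "pt \<Rightarrow> pt" where
  "phi x = ((fst x + snd x - 1) / of_int p, (fst x - snd x) / of_int q)"

definition psi :: "pt \<Rightarrow> pt" where
  "psi y = ((of_int p * fst y + of_int q * snd y + 1) / 2, (of_int p * fst y - of_int q * snd y + 1) / 2)"

lemma pq_nz: "(of_int p :: real) \<noteq> 0" "(of_int q :: real) \<noteq> 0" "(of_int p :: real) > 0" "(of_int q :: real) > 0"
  using ppos qpos by simp_all

lemma inv_phi: "inv phi = psi"
proof (rule inv_equality)
  fix x show "psi (phi x) = x" using pq_nz unfolding phi_def psi_def
    by (cases x) (simp add: field_simps)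
next
  fix y show "phi (psi y) = y" using pq_nz unfolding phi_def psi_def
    by (cases y) (simp add: field_simps)
qed

lemma affine_phi: "affine_bij phi"
  unfolding affine_bij_def
proof (intro exI conjI)
  show "1 / of_int p * (- 1 / of_int q) - 1 / of_int p * (1 / of_int q) \<noteq> (0::real)"
    using pq_nz by (simp add: field_simps)
  show "phi = (\<lambda>x. (1 / of_int p * fst x + 1 / of_int p * snd x + (- 1 / of_int p), 1 / of_int q * fst x + (- 1 / of_int q) * snd x + 0))"
    unfolding phi_def using pq_nz by (intro ext) (simp add: field_simps)
qed

lemma conj_eq:
  assumes "real_of_int a = (of_int p * of_int A + of_int q * of_int B) / 2"
    "real_of_int b = (of_int p * of_int A - of_int q * of_int B) / 2"
  shows "psi \<circ> sg e1 e2 A B \<circ> phi = Fm e1 (e1 \<noteq> e2) a b"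
proof (rule ext)
  fix x :: pt
  obtain x1 x2 where x: "x = (x1,x2)" by (cases x)
  show "(psi \<circ> sg e1 e2 A B \<circ> phi) x = Fm e1 (e1 \<noteq> e2) a b x"
    using pq_nz unfolding x Fm_def assms
    by (cases e1; cases e2) (simp_all add: psi_def sg_def phi_def field_simps)
qed

lemma type_cmm_G1: "type_cmm (G1 P)"
  unfolding type_cmm_def
proof (intro exI conjI)
  show "affine_bij phi" by (rule affine_phi)
  show "G1 P = (\<lambda>g. inv phi \<circ> g \<circ> phi) ` std_cmm"
  proof
    show "G1 P \<subseteq> (\<lambda>g. inv phi \<circ> g \<circ> phi) ` std_cmm"
    proof
      fix f assume "f \<in> G1 P"
      then obtain ng sw a b where T: "T a b" and f: "f = Fm ng sw a b" using G1_sub by blast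
      obtain A B where eA: "a + b = p*A" and eB: "a - b = q*B" and ev: "even (A+B)" using T NT by blast
      have "2 * a = p * A + q * B" "2 * b = p * A - q * B" using eA eB by algebra+
      then have "real_of_int (2 * a) = real_of_int (p * A + q * B)" "real_of_int (2 * b) = real_of_int (p * A - q * B)"
        by simp_all
      then have r: "real_of_int a = (of_int p * of_int A + of_int q * of_int B) / 2"
        "real_of_int b = (of_int p * of_int A - of_int q * of_int B) / 2" by simp_all
      have "f = psi \<circ> sg ng (ng \<noteq> sw) A B \<circ> phi" using conj_eq[OF r, of ng "ng \<noteq> sw"] f by (cases ng; cases sw) simp_all
      moreover have "sg ng (ng \<noteq> sw) A B \<in> std_cmm" using ev std_cmm_eq by blast
      ultimately show "f \<in> (\<lambda>g. inv phi \<circ> g \<circ> phi) ` std_cmm" unfolding inv_phi by blast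
    qed
  next
    show "(\<lambda>g. inv phi \<circ> g \<circ> phi) ` std_cmm \<subseteq> G1 P"
    proof
      fix f assume "f \<in> (\<lambda>g. inv phi \<circ> g \<circ> phi) ` std_cmm"
      then obtain e1 e2 A B where ev: "even (A + B)" and f: "f = psi \<circ> sg e1 e2 A B \<circ> phi"
        unfolding inv_phi std_cmm_eq by blast
      have e: "even (p*A + q*B)" "even (p*A - q*B)" using exab[OF ev] by auto
      define a where "a = (p*A + q*B) div 2"
      define b where "b = (p*A - q*B) div 2"
      have a2: "2 * a = p*A + q*B" unfolding a_def using e by simp
      have b2: "2 * b = p*A - q*B" unfolding b_def using e by simp
      have "a + b = p * A" "a - b = q * B" using a2 b2 by algebra+
      then have T: "T a b" using NT ev by blast
      have "real_of_int (2 * a) = real_of_int (p * A + q * B)" "real_of_int (2 * b) = real_of_int (p * A - q * B)"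
        using a2 b2 by simp_all
      then have r: "real_of_int a = (of_int p * of_int A + of_int q * of_int B) / 2"
        "real_of_int b = (of_int p * of_int A - of_int q * of_int B) / 2" by simp_all
      have "f = Fm e1 (e1 \<noteq> e2) a b" using f conj_eq[OF r] by simp
      then show "f \<in> G1 P" using Fm_G1[OF T] by simp
    qed
  qed
qed

end

definition Dg :: "real \<Rightarrow> pt set" where "Dg c = {x. fst x - snd x = c}"
definition Ag :: "real \<Rightarrow> pt set" where "Ag c = {x. fst x + snd x = c}"

lemma Dg_inj: "Dg c = Dg c' \<longleftrightarrow> c = c'"
proof
  assume h: "Dg c = Dg c'"
  have "(c,0) \<in> Dg c" by (simp add: Dg_def)
  then have "(c,0) \<in> Dg c'" using h by simp
  then show "c = c'" unfolding Dg_def by simp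
qed simp

lemma Ag_inj: "Ag c = Ag c' \<longleftrightarrow> c = c'"
proof
  assume h: "Ag c = Ag c'"
  have "(c,0) \<in> Ag c" by (simp add: Ag_def)
  then have "(c,0) \<in> Ag c'" using h by simp
  then show "c = c'" unfolding Ag_def by simp
qed simp

lemma Dg_Ag: "Dg c \<noteq> Ag c'"
proof
  assume h: "Dg c = Ag c'"
  have "(c,0) \<in> Dg c" "(c+1,1) \<in> Dg c" by (simp_all add: Dg_def)
  then have "(c,0) \<in> Ag c'" "(c+1,1) \<in> Ag c'" using h by simp_all
  then show False unfolding Ag_def by simp
qed

lemma line_D:
  assumes "fst u = snd u" "fst u \<noteq> 0"
  shows "line_thru p u = Dg (fst p - snd p)"
proof
  show "line_thru p u \<subseteq> Dg (fst p - snd p)"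
    unfolding line_thru_def Dg_def using assms by auto
  show "Dg (fst p - snd p) \<subseteq> line_thru p u"
  proof
    fix x assume "x \<in> Dg (fst p - snd p)"
    then have hx: "fst x - snd x = fst p - snd p" unfolding Dg_def by simp
    define t where "t = (fst x - fst p) / fst u"
    have e1: "fst x = fst p + t * fst u" unfolding t_def using assms by simp
    have e2: "snd x = snd p + t * snd u" using e1 hx assms by simp
    have "x = p + t *\<^sub>R u" using e1 e2 by (simp add: prod_eq_iff)
    then show "x \<in> line_thru p u" unfolding line_thru_def by blast
  qed
qed

lemma line_A:
  assumes "fst u = - snd u" "fst u \<noteq> 0"
  shows "line_thru p u = Ag (fst p + snd p)"
proof
  show "line_thru p u \<subseteq> Ag (fst p + snd p)"
    unfolding line_thru_def Ag_def using assms by auto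
  show "Ag (fst p + snd p) \<subseteq> line_thru p u"
  proof
    fix x assume "x \<in> Ag (fst p + snd p)"
    then have hx: "fst x + snd x = fst p + snd p" unfolding Ag_def by simp
    define t where "t = (fst x - fst p) / fst u"
    have e1: "fst x = fst p + t * fst u" unfolding t_def using assms by simp
    have e2: "snd x = snd p + t * snd u" using e1 hx assms by simp
    have "x = p + t *\<^sub>R u" using e1 e2 by (simp add: prod_eq_iff)
    then show "x \<in> line_thru p u" unfolding line_thru_def by blast
  qed
qed

definition r2 :: real where "r2 = sqrt 2 / 2"

lemma r2sq: "r2 * r2 = 1/2"
  unfolding r2_def by (simp add: field_simps)

lemma r2pos: "r2 > 0" unfolding r2_def by simp

lemma refl_D: "reflect_in (c,0) (r2,r2) x = (c + snd x, fst x - c)"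
proof -
  have "2 * ((fst x - c) * r2 + snd x * r2) * r2 = ((fst x - c) + snd x) * (2 * (r2 * r2))"
    by (simp add: algebra_simps)
  also have "\<dots> = (fst x - c) + snd x" using r2sq by simp
  finally have k: "2 * ((fst x - c) * r2 + snd x * r2) * r2 = (fst x - c) + snd x" .
  show ?thesis unfolding reflect_in_def dotp_def using k by (simp add: prod_eq_iff algebra_simps)
qed


lemma refl_A: "reflect_in (c,0) (r2,-r2) x = (c - snd x, c - fst x)"
proof -
  have "2 * ((fst x - c) * r2 + snd x * - r2) * r2 = ((fst x - c) - snd x) * (2 * (r2 * r2))"
    by (simp add: algebra_simps)
  also have "\<dots> = (fst x - c) - snd x" using r2sq by simp
  finally have k: "2 * ((fst x - c) * r2 + snd x * - r2) * r2 = (fst x - c) - snd x" .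
  show ?thesis unfolding reflect_in_def dotp_def using k by (simp add: prod_eq_iff algebra_simps)
qed

lemma G_diff: "(reflect_in p u x + d *\<^sub>R u) - (reflect_in p u y + d *\<^sub>R u) = (2 * dotp (x - y) u) *\<^sub>R u - (x - y)"
  unfolding reflect_in_def dotp_def by (simp add: prod_eq_iff algebra_simps)

lemma G_p: "reflect_in p u p + d *\<^sub>R u = p + d *\<^sub>R u"
  unfolding reflect_in_def dotp_def by (simp add: prod_eq_iff)

lemma glide_Fm:
  assumes eq: "Fm ng sw a b = (\<lambda>x. reflect_in p u x + d *\<^sub>R u)" and uu: "dotp u u = 1"
  shows "sw" "fst u \<noteq> 0" "\<bar>fst u\<bar> = \<bar>snd u\<bar>"
    "\<not> ng \<Longrightarrow> fst u = snd u \<and> fst p - snd p = (a - b)/2 \<and> (d = 0 \<longrightarrow> a + b = 0)"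
    "ng \<Longrightarrow> fst u = - snd u \<and> fst p + snd p = 1 + (a + b)/2 \<and> (d = 0 \<longrightarrow> a = b)"
proof -
  obtain u1 u2 where u: "u = (u1,u2)" by (cases u)
  obtain p1 p2 where p: "p = (p1,p2)" by (cases p)
  let ?G = "\<lambda>x. reflect_in p u x + d *\<^sub>R u"
  have F: "Fm ng sw a b x = ?G x" for x using eq by simp
  have uu': "u1 * u1 + u2 * u2 = 1" using uu u by (simp add: dotp_def)
  have "Fm ng sw a b (1,0) - Fm ng sw a b (0,0) = ?G (1,0) - ?G (0,0)" using F by simp
  also have "\<dots> = (2 * u1 * u1 - 1, 2 * u1 * u2)" unfolding G_diff using u
    by (simp add: dotp_def)
  finally have e1: "Fm ng sw a b (1,0) - Fm ng sw a b (0,0) = (2 * u1 * u1 - 1, 2 * u1 * u2)" .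
  have "Fm ng sw a b (0,1) - Fm ng sw a b (0,0) = ?G (0,1) - ?G (0,0)" using F by simp
  also have "\<dots> = (2 * u1 * u2, 2 * u2 * u2 - 1)" unfolding G_diff using u
    by (simp add: dotp_def)
  finally have e2: "Fm ng sw a b (0,1) - Fm ng sw a b (0,0) = (2 * u1 * u2, 2 * u2 * u2 - 1)" .
  have e3: "Fm ng sw a b p = p + d *\<^sub>R u" using F G_p by simp
  show sw:"sw"
  proof (rule ccontr)
    assume "\<not> sw"
    then show False using e1 e2 uu' by (cases ng) (simp_all add: Fm_def)
  qed
  have sq: "u1 * u1 = 1/2" "u2 * u2 = 1/2" using e1 e2 sw by (cases ng; simp add: Fm_def)+
  then have u1nz: "u1 \<noteq> 0" by auto
  then show "fst u \<noteq> 0" using u by simp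
  have A: "u1 = u2 \<and> fst p - snd p = (a - b)/2 \<and> (d = 0 \<longrightarrow> a + b = 0)" if ng: "\<not> ng"
  proof -
    have "2 * u1 * u2 = 1" using e1 sw ng by (simp add: Fm_def)
    then have "(u1 - u2) * (u1 - u2) = 0" using sq by (simp add: algebra_simps)
    then have uu2: "u1 = u2" by simp
    have "p2 + a = p1 + d * u1" "p1 + b = p2 + d * u2" using e3 sw ng p u by (simp_all add: Fm_def)
    then show ?thesis using uu2 p by auto
  qed
  have B: "u1 = - u2 \<and> fst p + snd p = 1 + (a + b)/2 \<and> (d = 0 \<longrightarrow> a = b)" if ng: "ng"
  proof -
    have "2 * u1 * u2 = -1" using e1 sw ng by (simp add: Fm_def)
    then have "(u1 + u2) * (u1 + u2) = 0" using sq by (simp add: algebra_simps)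
    then have uu2: "u1 = - u2" by (simp add: add_eq_0_iff2)
    have h: "1 - p2 + a = p1 + d * u1" "1 - p1 + b = p2 + d * u2" using e3 sw ng p u by (simp_all add: Fm_def)
    then have h': "1 - p2 + a = p1 - d * u2" using uu2 by simp
    have "p1 + p2 = 1 + (real_of_int a + real_of_int b)/2" using h(2) h' by argo
    moreover have "d = 0 \<longrightarrow> a = b"
    proof
      assume d0: "d = 0"
      have "1 - p1 + real_of_int b = p2" "1 - p2 + real_of_int a = p1" using d0 h(2) h' by simp_all
      then have "real_of_int a = real_of_int b" by argo
      then show "a = b" by simp
    qed
    ultimately show ?thesis using uu2 p by simp
  qed
  show "\<not> ng \<Longrightarrow> fst u = snd u \<and> fst p - snd p = (a - b)/2 \<and> (d = 0 \<longrightarrow> a + b = 0)" using A u by simp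
  show "ng \<Longrightarrow> fst u = - snd u \<and> fst p + snd p = 1 + (a + b)/2 \<and> (d = 0 \<longrightarrow> a = b)" using B u by simp
  show "\<bar>fst u\<bar> = \<bar>snd u\<bar>" using A B u by (cases ng) auto
qed


lemma r2_dot: "dotp (r2,r2) (r2,r2) = 1" "dotp (r2,-r2) (r2,-r2) = 1"
  using r2sq by (simp_all add: dotp_def)

context rh begin

lemma glide_sub:
  assumes "f \<in> G1 P" "glide_refl_axis f L"
  shows "swaps_strands f"
    "(\<exists>a b. T a b \<and> L = Dg (of_int (a - b) / 2)) \<or> (\<exists>a b. T a b \<and> L = Ag (1 + of_int (a + b) / 2))"
proof -
  obtain ng sw a b where T: "T a b" and f: "f = Fm ng sw a b" using G1_sub[OF assms(1)] by blast
  obtain p u d where uu: "dotp u u = 1" and L: "L = line_thru p u" and fe: "f = (\<lambda>x. reflect_in p u x + d *\<^sub>R u)"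
    using assms(2) unfolding glide_refl_axis_def by blast
  have e: "Fm ng sw a b = (\<lambda>x. reflect_in p u x + d *\<^sub>R u)" using f fe by simp
  note g = glide_Fm[OF e uu]
  show "swaps_strands f" using g(1) f Fm_swaps by simp
  show "(\<exists>a b. T a b \<and> L = Dg (of_int (a - b) / 2)) \<or> (\<exists>a b. T a b \<and> L = Ag (1 + of_int (a + b) / 2))"
  proof (cases ng)
    case False
    then have "fst u = snd u" "fst p - snd p = of_int (a - b) / 2" using g(4) by auto
    then have "L = Dg (of_int (a - b) / 2)" using L line_D g(2) by metis
    then show ?thesis using T by blast
  next
    case True
    then have "fst u = - snd u" "fst p + snd p = 1 + of_int (a + b) / 2" using g(5) by auto
    then have "L = Ag (1 + of_int (a + b) / 2)" using L line_A g(2) by metis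
    then show ?thesis using T by blast
  qed
qed

lemma glide_diag:
  assumes "f \<in> G1 P" "glide_refl_axis f L"
  shows "diagonal_line L"
proof -
  obtain ng sw a b where f: "f = Fm ng sw a b" using G1_sub[OF assms(1)] by blast
  obtain p u d where uu: "dotp u u = 1" and L: "L = line_thru p u" and fe: "f = (\<lambda>x. reflect_in p u x + d *\<^sub>R u)"
    using assms(2) unfolding glide_refl_axis_def by blast
  have e: "Fm ng sw a b = (\<lambda>x. reflect_in p u x + d *\<^sub>R u)" using f fe by simp
  show ?thesis unfolding diagonal_line_def using glide_Fm(3)[OF e uu] uu L by blast
qed

lemma mirror_glide: "mirror_axis_of f L \<Longrightarrow> glide_refl_axis f L"
  unfolding mirror_axis_of_def glide_refl_axis_def
  by (metis (no_types, lifting) add.right_neutral scale_zero_left)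

lemma mirror_sub:
  assumes "f \<in> G1 P" "mirror_axis_of f L"
  shows "(\<exists>a. T a (-a) \<and> L = Dg (of_int a)) \<or> (\<exists>a. T a a \<and> L = Ag (1 + of_int a))"
proof -
  obtain ng sw a b where T: "T a b" and f: "f = Fm ng sw a b" using G1_sub[OF assms(1)] by blast
  obtain p u where uu: "dotp u u = 1" and L: "L = line_thru p u" and fe: "f = reflect_in p u"
    using assms(2) unfolding mirror_axis_of_def by blast
  have e: "Fm ng sw a b = (\<lambda>x. reflect_in p u x + 0 *\<^sub>R u)" using f fe by (simp add: fun_eq_iff)
  note g = glide_Fm[OF e uu]
  show ?thesis
  proof (cases ng)
    case False
    then have "fst u = snd u" "fst p - snd p = of_int (a - b) / 2" "a + b = 0" using g(4) by auto
    then have "L = Dg (of_int (a - b) / 2)" "b = -a" using L line_D g(2) by (metis, linarith)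
    moreover have "of_int (a - b) / 2 = (of_int a :: real)" using \<open>b = -a\<close> by simp
    ultimately show ?thesis using T by auto
  next
    case True
    then have "fst u = - snd u" "fst p + snd p = 1 + of_int (a + b) / 2" "a = b" using g(5) by auto
    then have "L = Ag (1 + of_int (a + b) / 2)" using L line_A g(2) by metis
    moreover have "1 + of_int (a + b) / 2 = 1 + (of_int a :: real)" using \<open>a = b\<close> by simp
    ultimately show ?thesis using T \<open>a = b\<close> by auto
  qed
qed

lemma mirror_supD: "T a (-a) \<Longrightarrow> mirror_axis (G1 P) (Dg (of_int a))"
proof -
  assume T: "T a (-a)"
  have "Fm False True a (-a) = reflect_in (of_int a, 0) (r2,r2)"
    by (simp add: fun_eq_iff refl_D Fm_def)
  moreover have "line_thru (of_int a, 0) (r2,r2) = Dg (of_int a)" using line_D[of "(r2,r2)"] r2pos by simp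
  ultimately have "mirror_axis_of (Fm False True a (-a)) (Dg (of_int a))"
    unfolding mirror_axis_of_def using r2_dot by metis
  then show ?thesis unfolding mirror_axis_def using Fm_G1[OF T] by blast
qed

lemma mirror_supA: "T a a \<Longrightarrow> mirror_axis (G1 P) (Ag (1 + of_int a))"
proof -
  assume T: "T a a"
  have "Fm True True a a = reflect_in (1 + of_int a, 0) (r2,-r2)"
    by (simp add: fun_eq_iff refl_A Fm_def)
  moreover have "line_thru (1 + of_int a, 0) (r2,-r2) = Ag (1 + of_int a)" using line_A[of "(r2,-r2)"] r2pos by simp
  ultimately have "mirror_axis_of (Fm True True a a) (Ag (1 + of_int a))"
    unfolding mirror_axis_of_def using r2_dot by metis
  then show ?thesis unfolding mirror_axis_def using Fm_G1[OF T] by blast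
qed

lemma glide_supD: "T a b \<Longrightarrow> \<exists>f\<in>G1 P. glide_refl_axis f (Dg (of_int (a - b) / 2))"
proof -
  assume T: "T a b"
  define c where "c = (of_int (a - b) / 2 :: real)"
  define d where "d = of_int (a + b) * r2"
  have "Fm False True a b = (\<lambda>x. reflect_in (c, 0) (r2,r2) x + d *\<^sub>R (r2,r2))"
  proof (rule ext)
    fix x
    have "d * r2 = of_int (a + b) / 2" unfolding d_def using r2sq by (simp add: mult.assoc)
    then show "Fm False True a b x = reflect_in (c, 0) (r2,r2) x + d *\<^sub>R (r2,r2)"
      unfolding refl_D Fm_def c_def by (simp add: field_simps)
  qed
  moreover have "line_thru (c, 0) (r2,r2) = Dg c" using line_D[of "(r2,r2)"] r2pos by simp
  ultimately have "glide_refl_axis (Fm False True a b) (Dg c)"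
    unfolding glide_refl_axis_def using r2_dot by metis
  then show ?thesis using Fm_G1[OF T] c_def by blast
qed

lemma glide_supA: "T a b \<Longrightarrow> \<exists>f\<in>G1 P. glide_refl_axis f (Ag (1 + of_int (a + b) / 2))"
proof -
  assume T: "T a b"
  define c where "c = (1 + of_int (a + b) / 2 :: real)"
  define d where "d = of_int (a - b) * r2"
  have "Fm True True a b = (\<lambda>x. reflect_in (c, 0) (r2,-r2) x + d *\<^sub>R (r2,-r2))"
  proof (rule ext)
    fix x
    have "d * r2 = of_int (a - b) / 2" unfolding d_def using r2sq by (simp add: mult.assoc)
    then show "Fm True True a b x = reflect_in (c, 0) (r2,-r2) x + d *\<^sub>R (r2,-r2)"
      unfolding refl_A Fm_def c_def by (simp add: field_simps)
  qed
  moreover have "line_thru (c, 0) (r2,-r2) = Ag c" using line_A[of "(r2,-r2)"] r2pos by simp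
  ultimately have "glide_refl_axis (Fm True True a b) (Ag c)"
    unfolding glide_refl_axis_def using r2_dot by metis
  then show ?thesis using Fm_G1[OF T] c_def by blast
qed

end

context rh begin

lemma mkab: assumes ev: "even (A + B)" obtains a b where "a + b = p * A" "a - b = q * B"
proof -
  have e: "even (p*A + q*B)" "even (p*A - q*B)" using exab[OF ev] by auto
  define a where "a = (p*A + q*B) div 2"
  define b where "b = (p*A - q*B) div 2"
  have a2: "2 * a = p*A + q*B" unfolding a_def using e by simp
  have b2: "2 * b = p*A - q*B" unfolding b_def using e by simp
  have "a + b = p * A" "a - b = q * B" using a2 b2 by algebra+
  then show ?thesis using that by blast
qed

lemma glideD_iff: fixes c :: real shows "(\<exists>a b. T a b \<and> c = of_int (a - b) / 2) \<longleftrightarrow> (\<exists>Y. c = of_int (q*Y) / 2)"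
proof
  assume "\<exists>a b. T a b \<and> c = of_int (a - b) / 2"
  then obtain a b where "T a b" "c = of_int (a - b) / 2" by blast
  moreover obtain A B where "a - b = q * B" using \<open>T a b\<close> NT by blast
  ultimately show "\<exists>Y. c = of_int (q*Y) / 2" by metis
next
  assume "\<exists>Y. c = of_int (q*Y) / 2"
  then obtain Y where c: "c = of_int (q*Y) / 2" by blast
  have ev: "even (Y + Y)" by simp
  obtain a b where ab: "a + b = p * Y" "a - b = q * Y" using mkab[OF ev] by blast
  then have "T a b" using NT ev by blast
  then show "\<exists>a b. T a b \<and> c = of_int (a - b) / 2" using ab c by metis
qed

lemma glideA_iff: fixes c :: real shows "(\<exists>a b. T a b \<and> c = 1 + of_int (a + b) / 2) \<longleftrightarrow> (\<exists>X. c = 1 + of_int (p*X) / 2)"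
proof
  assume "\<exists>a b. T a b \<and> c = 1 + of_int (a + b) / 2"
  then obtain a b where "T a b" "c = 1 + of_int (a + b) / 2" by blast
  moreover obtain A where "a + b = p * A" using \<open>T a b\<close> NT by blast
  ultimately show "\<exists>X. c = 1 + of_int (p*X) / 2" by metis
next
  assume "\<exists>X. c = 1 + of_int (p*X) / 2"
  then obtain X where c: "c = 1 + of_int (p*X) / 2" by blast
  have ev: "even (X + X)" by simp
  obtain a b where ab: "a + b = p * X" "a - b = q * X" using mkab[OF ev] by blast
  then have "T a b" using NT ev by blast
  then show "\<exists>a b. T a b \<and> c = 1 + of_int (a + b) / 2" using ab c by metis
qed

lemma mirrorD_iff: fixes c :: real shows "(\<exists>a. T a (-a) \<and> c = of_int a) \<longleftrightarrow> (\<exists>Y. even Y \<and> c = of_int (q*Y) / 2)"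
proof
  assume "\<exists>a. T a (-a) \<and> c = of_int a"
  then obtain a where T: "T a (-a)" and c: "c = of_int a" by blast
  obtain A B where e1: "a + - a = p * A" and e2: "a - - a = q * B" and ev: "even (A + B)" using T NT by blast
  have "A = 0" using e1 ppos by simp
  then have "even B" using ev by simp
  moreover have "c = of_int (q * B) / 2"
  proof -
    have e2': "2 * a = q * B" using e2 by simp
    have "real_of_int (2 * a) = real_of_int (q * B)" using e2' by (rule arg_cong)
    then show ?thesis using c by simp
  qed
  ultimately show "\<exists>Y. even Y \<and> c = of_int (q*Y) / 2" by blast
next
  assume "\<exists>Y. even Y \<and> c = of_int (q*Y) / 2"
  then obtain Y where ev: "even Y" and c: "c = of_int (q*Y) / 2" by blast
  obtain k where Y: "Y = 2 * k" using ev by (rule evenE)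
  have "T (q*k) (-(q*k))" using NT[of "q*k" "-(q*k)"] Y ev by (intro iffD2[OF NT] exI[of _ 0] exI[of _ Y]) simp
  moreover have "c = of_int (q*k)" using c Y by simp
  ultimately show "\<exists>a. T a (-a) \<and> c = of_int a" by blast
qed

lemma mirrorA_iff: fixes c :: real shows "(\<exists>a. T a a \<and> c = 1 + of_int a) \<longleftrightarrow> (\<exists>X. even X \<and> c = 1 + of_int (p*X) / 2)"
proof
  assume "\<exists>a. T a a \<and> c = 1 + of_int a"
  then obtain a where T: "T a a" and c: "c = 1 + of_int a" by blast
  obtain A B where e1: "a + a = p * A" and e2: "a - a = q * B" and ev: "even (A + B)" using T NT by blast
  have "B = 0" using e2 qpos by simp
  then have "even A" using ev by simp
  moreover have "c = 1 + of_int (p * A) / 2"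
  proof -
    have e1': "2 * a = p * A" using e1 by simp
    have "real_of_int (2 * a) = real_of_int (p * A)" using e1' by (rule arg_cong)
    then show ?thesis using c by simp
  qed
  ultimately show "\<exists>X. even X \<and> c = 1 + of_int (p*X) / 2" by blast
next
  assume "\<exists>X. even X \<and> c = 1 + of_int (p*X) / 2"
  then obtain X where ev: "even X" and c: "c = 1 + of_int (p*X) / 2" by blast
  obtain k where X: "X = 2 * k" using ev by (rule evenE)
  have "T (p*k) (p*k)" using X ev by (intro iffD2[OF NT] exI[of _ X] exI[of _ 0]) simp
  moreover have "c = 1 + of_int (p*k)" using c X by simp
  ultimately show "\<exists>a. T a a \<and> c = 1 + of_int a" by blast
qed

lemma qY_inj: "of_int (q*Y) / 2 = (of_int (q*Y') / 2 :: real) \<Longrightarrow> Y = Y'"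
  using qpos by simp

lemma pX_inj: "1 + of_int (p*X) / 2 = (1 + of_int (p*X') / 2 :: real) \<Longrightarrow> X = X'"
  using ppos by simp

lemma between_char:
  "between_glide_axis (G1 P) L \<longleftrightarrow>
     (\<exists>Y. odd Y \<and> L = Dg (of_int (q*Y) / 2)) \<or> (\<exists>X. odd X \<and> L = Ag (1 + of_int (p*X) / 2))"
proof
  assume b: "between_glide_axis (G1 P) L"
  then obtain f where f: "f \<in> G1 P" "glide_refl_axis f L" and nm: "\<not> mirror_axis (G1 P) L"
    unfolding between_glide_axis_def by blast
  from glide_sub(2)[OF f] show "(\<exists>Y. odd Y \<and> L = Dg (of_int (q*Y) / 2)) \<or> (\<exists>X. odd X \<and> L = Ag (1 + of_int (p*X) / 2))"
  proof
    assume "\<exists>a b. T a b \<and> L = Dg (of_int (a - b) / 2)"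
    then obtain c where c: "\<exists>a b. T a b \<and> c = of_int (a - b) / 2" and L: "L = Dg c" by blast
    obtain Y where Y: "c = of_int (q*Y) / 2" using c glideD_iff by blast
    have "odd Y"
    proof
      assume "even Y"
      then obtain a where "T a (-a)" "c = of_int a" using mirrorD_iff Y by blast
      then have "mirror_axis (G1 P) L" using mirror_supD L by simp
      then show False using nm by simp
    qed
    then show ?thesis using L Y by blast
  next
    assume "\<exists>a b. T a b \<and> L = Ag (1 + of_int (a + b) / 2)"
    then obtain c where c: "\<exists>a b. T a b \<and> c = 1 + of_int (a + b) / 2" and L: "L = Ag c" by blast
    obtain X where X: "c = 1 + of_int (p*X) / 2" using c glideA_iff by blast
    have "odd X"
    proof
      assume "even X"
      then obtain a where "T a a" "c = 1 + of_int a" using mirrorA_iff X by blast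
      then have "mirror_axis (G1 P) L" using mirror_supA L by simp
      then show False using nm by simp
    qed
    then show ?thesis using L X by blast
  qed
next
  assume "(\<exists>Y. odd Y \<and> L = Dg (of_int (q*Y) / 2)) \<or> (\<exists>X. odd X \<and> L = Ag (1 + of_int (p*X) / 2))"
  then show "between_glide_axis (G1 P) L"
  proof
    assume "\<exists>Y. odd Y \<and> L = Dg (of_int (q*Y) / 2)"
    then obtain Y where Y: "odd Y" and L: "L = Dg (of_int (q*Y) / 2)" by blast
    obtain a b where "T a b" "of_int (q*Y) / 2 = (of_int (a - b) / 2 :: real)"
      using glideD_iff[of "of_int (q*Y) / 2"] by blast
    then have g: "\<exists>f\<in>G1 P. glide_refl_axis f L" using glide_supD L by metis
    have "\<not> mirror_axis (G1 P) L"
    proof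
      assume "mirror_axis (G1 P) L"
      then obtain f where "f \<in> G1 P" "mirror_axis_of f L" unfolding mirror_axis_def by blast
      from mirror_sub[OF this] show False
      proof
        assume "\<exists>a. T a (-a) \<and> L = Dg (of_int a)"
        then obtain a where "T a (-a)" "L = Dg (of_int a)" by blast
        then have "T a (-a) \<and> of_int (q*Y) / 2 = (of_int a :: real)" using L Dg_inj by simp
        then obtain Y' where "even Y'" "of_int (q*Y) / 2 = (of_int (q*Y') / 2 :: real)"
          using mirrorD_iff by blast
        then show False using qY_inj Y by blast
      next
        assume "\<exists>a. T a a \<and> L = Ag (1 + of_int a)"
        then show False using L Dg_Ag by metis
      qed
    qed
    then show ?thesis using g unfolding between_glide_axis_def by blast
  next
    assume "\<exists>X. odd X \<and> L = Ag (1 + of_int (p*X) / 2)"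
    then obtain X where X: "odd X" and L: "L = Ag (1 + of_int (p*X) / 2)" by blast
    obtain a b where "T a b" "1 + of_int (p*X) / 2 = (1 + of_int (a + b) / 2 :: real)"
      using glideA_iff[of "1 + of_int (p*X) / 2"] by blast
    then have g: "\<exists>f\<in>G1 P. glide_refl_axis f L" using glide_supA L by metis
    have "\<not> mirror_axis (G1 P) L"
    proof
      assume "mirror_axis (G1 P) L"
      then obtain f where "f \<in> G1 P" "mirror_axis_of f L" unfolding mirror_axis_def by blast
      from mirror_sub[OF this] show False
      proof
        assume "\<exists>a. T a (-a) \<and> L = Dg (of_int a)"
        then show False using L Dg_Ag by metis
      next
        assume "\<exists>a. T a a \<and> L = Ag (1 + of_int a)"
        then obtain a where "T a a" "L = Ag (1 + of_int a)" by blast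
        then have "T a a \<and> 1 + of_int (p*X) / 2 = (1 + of_int a :: real)" using L Ag_inj by simp
        then obtain X' where "even X'" "1 + of_int (p*X) / 2 = (1 + of_int (p*X') / 2 :: real)"
          using mirrorA_iff by blast
        then show False using pX_inj X by blast
      qed
    qed
    then show ?thesis using g unfolding between_glide_axis_def by blast
  qed
qed

end

lemma coprime_nat_of: "0 \<le> x \<Longrightarrow> 0 \<le> y \<Longrightarrow> coprime x y \<Longrightarrow> coprime (nat x) (nat (y::int))"
proof -
  assume h: "0 \<le> x" "0 \<le> y" "coprime x y"
  then have "coprime (int (nat x)) (int (nat y))" by simp
  then show ?thesis by (simp only: coprime_int_iff)
qed

lemma ints_quarter: "(of_int K / 4 :: real) \<in> \<int> \<longleftrightarrow> 4 dvd K"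
proof
  assume "(of_int K / 4 :: real) \<in> \<int>"
  then obtain z where z: "(of_int K / 4 :: real) = of_int z" by (auto elim: Ints_cases)
  then have "(of_int K :: real) = of_int (4 * z)" by simp
  then have "K = 4 * z" by (simp only: of_int_eq_iff)
  then show "4 dvd K" by simp
next
  assume "4 dvd K"
  then obtain z where "K = 4 * z" by auto
  then show "(of_int K / 4 :: real) \<in> \<int>" by simp
qed

context rh begin

lemma species28_P: "species28 P"
  unfolding species28_def
proof (intro conjI ballI allI impI)
  show "type_cmm (G1 P)" by (rule type_cmm_G1)
next
  fix f L assume "f \<in> G1 P" "mirror_axis_of f L"
  then show "diagonal_line L" using glide_diag mirror_glide by blast
next
  fix f L assume f: "f \<in> G1 P" and gb: "glide_refl_axis f L \<and> between_glide_axis (G1 P) L"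
  have sw: "swaps_strands f" using glide_sub(1)[OF f] gb by blast
  show "f \<notin> H1 P"
  proof
    assume "f \<in> H1 P"
    then have "symmetry P f False" unfolding H1_def by simp
    from CP[OF this] sw show False by simp
  qed
next
  fix f c assume f: "f \<in> G1 P" and h: "half_turn f c"
  obtain t where sym: "symmetry P f t" using f G1_def by blast
  have "\<not> swaps_strands f" using h unfolding half_turn_def swaps_strands_def by simp
  then have "t = False" using CP[OF sym] by simp
  then show "f \<in> H1 P" using sym H1_def by simp
next
  have T: "T 0 0" unfolding T_def by simp
  have "half_turn (Fm True False 0 0) (cell_centre (0,0))"
    unfolding half_turn_def by (simp add: fun_eq_iff Fm_def cell_centre_def)
  moreover have "cell_centre (0,0) \<in> cell_centres" unfolding cell_centres_def by simp
  ultimately show "\<exists>f\<in>G1 P. \<exists>c\<in>cell_centres. half_turn f c" using Fm_G1[OF T] by blast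
qed

lemma supp_form:
  assumes "supp_centre (G1 P) c"
  shows "\<exists>X Y. odd X \<and> odd Y \<and> fst c - snd c = of_int (q*Y)/2 \<and> fst c + snd c = 1 + of_int (p*X)/2"
proof -
  obtain L M where L: "between_glide_axis (G1 P) L" and M: "between_glide_axis (G1 P) M"
    and LM: "L \<noteq> M" and cL: "c \<in> L" and cM: "c \<in> M"
    using assms unfolding supp_centre_def by blast
  from L[unfolded between_char] M[unfolded between_char] show ?thesis
  proof (elim disjE exE conjE)
    fix Y Y' assume "L = Dg (of_int (q*Y) / 2)" "M = Dg (of_int (q*Y') / 2)"
    then show ?thesis using cL cM LM unfolding Dg_def by auto
  next
    fix Y X assume "odd Y" "L = Dg (of_int (q*Y) / 2)" "odd X" "M = Ag (1 + of_int (p*X) / 2)"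
    then show ?thesis using cL cM unfolding Dg_def Ag_def by auto
  next
    fix X Y assume "odd X" "L = Ag (1 + of_int (p*X) / 2)" "odd Y" "M = Dg (of_int (q*Y) / 2)"
    then show ?thesis using cL cM unfolding Dg_def Ag_def by auto
  next
    fix X X' assume "L = Ag (1 + of_int (p*X) / 2)" "M = Ag (1 + of_int (p*X') / 2)"
    then show ?thesis using cL cM LM unfolding Ag_def by auto
  qed
qed

lemma supp_coords:
  fixes c :: pt
  assumes "fst c - snd c = of_int (q*Y)/2" "fst c + snd c = 1 + of_int (p*X)/2"
  shows "fst c = of_int (2 + p*X + q*Y) / 4" "snd c = of_int (2 + p*X - q*Y) / 4"
  using assms by (simp_all only: of_int_add of_int_diff of_int_numeral; argo)+

lemma supp_odd:
  assumes on: "odd n" and sc: "supp_centre (G1 P) c"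
  shows "c \<in> cell_edge_points - cell_corners"
proof -
  obtain X Y where X: "odd X" and Y: "odd Y" and e1: "fst c - snd c = of_int (q*Y)/2"
    and e2: "fst c + snd c = 1 + of_int (p*X)/2" using supp_form[OF sc] by blast
  have po: "odd p" "odd q" using on pqn by auto
  define u where "u = p * X"
  define w where "w = q * Y"
  have uo: "odd u" "odd w" unfolding u_def w_def using po X Y by auto
  have key: "(4 dvd (2 + u + w)) \<noteq> (4 dvd (2 + u - w))" using uo by presburger
  have f1: "fst c = of_int (2 + u + w) / 4" unfolding u_def w_def by (rule supp_coords(1)[OF e1 e2])
  have f2: "snd c = of_int (2 + u - w) / 4" unfolding u_def w_def by (rule supp_coords(2)[OF e1 e2])
  have c1: "fst c \<in> \<int> \<longleftrightarrow> 4 dvd (2 + u + w)" by (simp only: f1 ints_quarter)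
  have c2: "snd c \<in> \<int> \<longleftrightarrow> 4 dvd (2 + u - w)" by (simp only: f2 ints_quarter)
  show ?thesis unfolding cell_edge_points_def cell_corners_def using key c1 c2 by auto
qed

lemma supp_even:
  assumes en: "even n" and sc: "supp_centre (G1 P) c"
  shows "c \<in> cell_corners"
proof -
  obtain X Y where X: "odd X" and Y: "odd Y" and e1: "fst c - snd c = of_int (q*Y)/2"
    and e2: "fst c + snd c = 1 + of_int (p*X)/2" using supp_form[OF sc] by blast
  note ef = even_facts[OF en]
  define p' where "p' = p div 2"
  define q' where "q' = q div 2"
  define \<alpha> where "\<alpha> = p' * X"
  define \<beta> where "\<beta> = q' * Y"
  have pa: "even \<alpha> \<longleftrightarrow> even p'" "even \<beta> \<longleftrightarrow> even q'" unfolding \<alpha>_def \<beta>_def using X Y by auto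
  have o: "odd (p' + q')" using ef(2) unfolding p'_def q'_def .
  have u: "p * X = 2 * \<alpha>" "q * Y = 2 * \<beta>" unfolding \<alpha>_def \<beta>_def p'_def q'_def using ef(3,4) by (metis mult.assoc)+
  have k1: "4 dvd (2 + 2 * \<alpha> + 2 * \<beta>)" "4 dvd (2 + 2 * \<alpha> - 2 * \<beta>)" using pa o by presburger+
  have f1: "fst c = of_int (2 + 2 * \<alpha> + 2 * \<beta>) / 4" using supp_coords(1)[OF e1 e2] unfolding u .
  have f2: "snd c = of_int (2 + 2 * \<alpha> - 2 * \<beta>) / 4" using supp_coords(2)[OF e1 e2] unfolding u .
  have "fst c \<in> \<int>" using k1 by (simp only: f1 ints_quarter)
  moreover have "snd c \<in> \<int>" using k1 by (simp only: f2 ints_quarter)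
  ultimately show ?thesis unfolding cell_corners_def by simp
qed

end

context rh begin

lemma gapD: "axis_gap (G1 P) (of_int q / 2, 0) (r2, r2) (of_int q * r2)"
  unfolding axis_gap_def
proof (intro conjI allI impI)
  show "of_int q * r2 > 0" using qpos r2pos by simp
  have bl: "between_glide_axis (G1 P) (line_thru (of_int q * 3 / 2, 0) (r2, r2))"
  proof -
    have "line_thru (of_int q * 3 / 2, 0) (r2, r2) = Dg (of_int (q*3) / 2)"
      using line_D[of "(r2,r2)"] r2pos by simp
    then show ?thesis unfolding between_char by (metis odd_numeral)
  qed
  moreover have "par_dist (of_int q / 2, 0) (r2, r2) (of_int q * 3 / 2, 0) = of_int q * r2"
    unfolding par_dist_def dotp_def using qpos r2pos by (simp add: abs_mult field_simps)
  ultimately show "\<exists>p'. between_glide_axis (G1 P) (line_thru p' (r2, r2)) \<and> par_dist (of_int q / 2, 0) (r2, r2) p' = of_int q * r2"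
    by blast
next
  fix p' assume h: "between_glide_axis (G1 P) (line_thru p' (r2, r2)) \<and> line_thru p' (r2, r2) \<noteq> line_thru (of_int q / 2, 0) (r2, r2)"
  have l1: "line_thru p' (r2, r2) = Dg (fst p' - snd p')" using line_D[of "(r2,r2)"] r2pos by simp
  have l2: "line_thru (of_int q / 2, 0) (r2, r2) = Dg (of_int q / 2)" using line_D[of "(r2,r2)"] r2pos by simp
  obtain Y where Y: "odd Y" and dY: "fst p' - snd p' = of_int (q*Y) / 2"
    using h l1 Dg_Ag Dg_inj unfolding between_char by metis
  have "Y \<noteq> 1" using h l1 l2 dY by auto
  then have Y2: "2 \<le> \<bar>1 - Y\<bar>" using Y by presburger
  then have Y2r: "2 \<le> \<bar>1 - real_of_int Y\<bar>" by (metis of_int_1 of_int_abs of_int_diff of_int_le_iff of_int_numeral)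
  have "(fst p' - of_int q / 2) * (- r2) + (snd p' - 0) * r2 = r2 * (of_int q / 2 - (fst p' - snd p'))"
    by (simp add: algebra_simps)
  also have "\<dots> = r2 * (of_int q * (1 - of_int Y) / 2)" using dY by (simp add: algebra_simps)
  finally have E: "(fst p' - of_int q / 2) * (- r2) + (snd p' - 0) * r2 = r2 * (of_int q * (1 - of_int Y) / 2)" .
  have "par_dist (of_int q / 2, 0) (r2, r2) p' = \<bar>(fst p' - of_int q / 2) * (- r2) + (snd p' - 0) * r2\<bar>"
    unfolding par_dist_def dotp_def by simp
  also have "\<dots> = r2 * (of_int q * \<bar>1 - of_int Y\<bar> / 2)" unfolding E using r2pos qpos by (simp add: abs_mult)
  finally have pd: "par_dist (of_int q / 2, 0) (r2, r2) p' = r2 * (of_int q * \<bar>1 - of_int Y\<bar> / 2)" .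
  have "of_int q * r2 * 2 \<le> of_int q * r2 * \<bar>1 - of_int Y\<bar>"
    using Y2r qpos r2pos by (intro mult_left_mono) simp_all
  then show "of_int q * r2 \<le> par_dist (of_int q / 2, 0) (r2, r2) p'" unfolding pd by (simp add: field_simps)
qed

lemma gapA: "axis_gap (G1 P) (1 + of_int p / 2, 0) (r2, -r2) (of_int p * r2)"
  unfolding axis_gap_def
proof (intro conjI allI impI)
  show "of_int p * r2 > 0" using ppos r2pos by simp
  have bl: "between_glide_axis (G1 P) (line_thru (1 + of_int p * 3 / 2, 0) (r2, -r2))"
  proof -
    have "line_thru (1 + of_int p * 3 / 2, 0) (r2, -r2) = Ag (1 + of_int (p*3) / 2)"
      using line_A[of "(r2,-r2)"] r2pos by simp
    then show ?thesis unfolding between_char by (metis odd_numeral)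
  qed
  moreover have "par_dist (1 + of_int p / 2, 0) (r2, -r2) (1 + of_int p * 3 / 2, 0) = of_int p * r2"
    unfolding par_dist_def dotp_def using ppos r2pos by (simp add: abs_mult field_simps)
  ultimately show "\<exists>p'. between_glide_axis (G1 P) (line_thru p' (r2, -r2)) \<and> par_dist (1 + of_int p / 2, 0) (r2, -r2) p' = of_int p * r2"
    by blast
next
  fix p' assume h: "between_glide_axis (G1 P) (line_thru p' (r2, -r2)) \<and> line_thru p' (r2, -r2) \<noteq> line_thru (1 + of_int p / 2, 0) (r2, -r2)"
  have l1: "line_thru p' (r2, -r2) = Ag (fst p' + snd p')" using line_A[of "(r2,-r2)"] r2pos by simp
  have l2: "line_thru (1 + of_int p / 2, 0) (r2, -r2) = Ag (1 + of_int p / 2)" using line_A[of "(r2,-r2)"] r2pos by simp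
  obtain X where X: "odd X" and dX: "fst p' + snd p' = 1 + of_int (p*X) / 2"
    using h l1 Dg_Ag Ag_inj unfolding between_char by metis
  have "X \<noteq> 1" using h l1 l2 dX by auto
  then have X2: "2 \<le> \<bar>X - 1\<bar>" using X by presburger
  then have X2r: "2 \<le> \<bar>real_of_int X - 1\<bar>" by (metis of_int_1 of_int_abs of_int_diff of_int_le_iff of_int_numeral)
  have "(fst p' - (1 + of_int p / 2)) * r2 + (snd p' - 0) * r2 = r2 * ((fst p' + snd p') - (1 + of_int p / 2))"
    by (simp add: algebra_simps)
  also have "\<dots> = r2 * (of_int p * (of_int X - 1) / 2)" using dX by (simp add: algebra_simps)
  finally have E: "(fst p' - (1 + of_int p / 2)) * r2 + (snd p' - 0) * r2 = r2 * (of_int p * (of_int X - 1) / 2)" .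
  have "par_dist (1 + of_int p / 2, 0) (r2, -r2) p' = \<bar>(fst p' - (1 + of_int p / 2)) * r2 + (snd p' - 0) * r2\<bar>"
    unfolding par_dist_def dotp_def by simp
  also have "\<dots> = r2 * (of_int p * \<bar>of_int X - 1\<bar> / 2)" unfolding E using r2pos ppos by (simp add: abs_mult)
  finally have pd: "par_dist (1 + of_int p / 2, 0) (r2, -r2) p' = r2 * (of_int p * \<bar>of_int X - 1\<bar> / 2)" .
  have "of_int p * r2 * 2 \<le> of_int p * r2 * \<bar>of_int X - 1\<bar>"
    using X2r ppos r2pos by (intro mult_left_mono) simp_all
  then show "of_int p * r2 \<le> par_dist (1 + of_int p / 2, 0) (r2, -r2) p'" unfolding pd by (simp add: field_simps)
qed

lemma betwD0: "between_glide_axis (G1 P) (line_thru (of_int q / 2, 0) (r2, r2))"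
proof -
  have "line_thru (of_int q / 2, 0) (r2, r2) = Dg (of_int (q*1) / 2)" using line_D[of "(r2,r2)"] r2pos by simp
  then show ?thesis unfolding between_char by (metis odd_one)
qed

lemma betwA0: "between_glide_axis (G1 P) (line_thru (1 + of_int p / 2, 0) (r2, -r2))"
proof -
  have "line_thru (1 + of_int p / 2, 0) (r2, -r2) = Ag (1 + of_int (p*1) / 2)" using line_A[of "(r2,-r2)"] r2pos by simp
  then show ?thesis unfolding between_char by (metis odd_one)
qed

lemma crect1: "central_rect (G1 P) (of_int q * r2) (of_int p * r2)"
  unfolding central_rect_def
  using r2_dot betwD0 betwA0 gapD gapA by (intro exI[of _ "(of_int q / 2, 0)"] exI[of _ "(r2,r2)"] exI[of _ "(1 + of_int p / 2, 0)"] exI[of _ "(r2,-r2)"]) (simp add: dotp_def)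

lemma crect2: "central_rect (G1 P) (of_int p * r2) (of_int q * r2)"
  unfolding central_rect_def
  using r2_dot betwD0 betwA0 gapD gapA by (intro exI[of _ "(1 + of_int p / 2, 0)"] exI[of _ "(r2,-r2)"] exI[of _ "(of_int q / 2, 0)"] exI[of _ "(r2,r2)"]) (simp add: dotp_def)

lemma main_odd: "odd n \<Longrightarrow> species28o P"
proof -
  assume on: "odd n"
  have po: "odd p" "odd q" using on pqn by auto
  have hd: "half_diag = r2" unfolding half_diag_def cell_diag_def r2_def by simp
  have "central_rect (G1 P) (real (nat q) * half_diag) (real (nat p) * half_diag)"
    using crect1 qpos ppos hd by simp
  moreover have "odd (nat q)" "odd (nat p)" using po qpos ppos by (simp_all add: even_nat_iff)
  moreover have "coprime (nat q) (nat p)" using cop_odd[OF on] qpos ppos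
    by (intro coprime_nat_of) (simp_all add: coprime_commute)
  ultimately show ?thesis unfolding species28o_def using species28_P supp_odd[OF on] by blast
qed

lemma main_even: "even n \<Longrightarrow> species28e P"
proof -
  assume en: "even n"
  note ef = even_facts[OF en]
  define p' where "p' = p div 2"
  define q' where "q' = q div 2"
  have pp: "p = 2 * p'" "q = 2 * q'" using ef(3,4) unfolding p'_def q'_def by simp_all
  have pos: "p' > 0" "q' > 0" using pp ppos qpos by simp_all
  have cd: "cell_diag = 2 * r2" unfolding cell_diag_def r2_def by simp
  have rq: "of_int q * r2 = real (nat q') * cell_diag" "of_int p * r2 = real (nat p') * cell_diag"
    using pp pos cd by simp_all
  have cp: "coprime (nat q') (nat p')" "coprime (nat p') (nat q')" using ef(1) pos unfolding p'_def[symmetric] q'_def[symmetric]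
    by (simp_all add: coprime_nat_of coprime_commute)
  have o: "odd (p' + q')" using ef(2) unfolding p'_def q'_def .
  have ex: "\<exists>a b :: nat. odd a \<and> even b \<and> coprime a b \<and> central_rect (G1 P) (a * cell_diag) (b * cell_diag)"
  proof (cases "odd q'")
    case True
    then have "even p'" using o by simp
    then show ?thesis using True cp crect1 rq pos by (intro exI[of _ "nat q'"] exI[of _ "nat p'"]) (simp add: even_nat_iff)
  next
    case False
    then have "odd p'" using o by simp
    then show ?thesis using False cp crect2 rq pos by (intro exI[of _ "nat p'"] exI[of _ "nat q'"]) (simp add: even_nat_iff)
  qed
  show ?thesis unfolding species28e_def using species28_P supp_even[OF en] ex by blast
qed

end

theorem theorem2:
  fixes n s :: int
  assumes "n > 0" and "coprime n s" and "rhombic_satin n s"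
  shows "(odd n \<longrightarrow> species28o (satin n s)) \<and> (even n \<longrightarrow> species28e (satin n s))"
proof -
  note b = rh_basic[OF assms]
  obtain p q where pq: "p > 0" "q > 0" "p * q = n" "q dvd s - 1" "p dvd s + 1"
    using pq_exist[OF assms(1) b(1)] by blast
  have evc: "even n \<Longrightarrow> odd ((s-1) div q) \<and> odd ((s+1) div p) \<and> even p \<and> even q"
    using pq_even[OF pq _ assms(2)] b(3) by blast
  interpret rh n s p q
    using b(1,2) assms(2) pq evc by unfold_locales auto
  show ?thesis using main_odd main_even by blast
qed


end
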